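(* Assume $f_\rho\in\mathscr H_K$. Let $(\gamma_t)_{t\ge1}$ and $(\lambda_t)_{t\ge0}$ be sequences of positive reals, both converging to $0$, and let $(f_t)_{t\ge0}$ be the online sequence defined below with an arbitrary initial value $f_0\in\mathscr H_K$. Suppose that (A) $\sum_{t\ge1}\gamma_t\lambda_t=\infty$; (B) $\displaystyle\limsup_{n\to\infty}\sum_{k=1}^n\gamma_k^2\prod_{i=k+1}^n(1-\gamma_i\lambda_i)^2=0$; (C) $\displaystyle\limsup_{n\to\infty}\sum_{k=1}^n\|f_{\lambda_k}-f_{\lambda_{k-1}}\|_K\prod_{i=k+1}^n(1-\gamma_i\lambda_i)=0$. Then $\displaystyle\lim_{t\to\infty}\mathbb E\big[\|f_t-f_\rho\|_K^2\big]=0$.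
   Context: Setting. $\mathscr X\subseteq\mathbb R^n$ is closed, $\mathscr Y=\mathbb R$, $\mathscr Z=\mathscr X\times\mathscr Y$, and $\rho$ is a Borel probability measure on $\mathscr Z$ with marginal $\rho_{\mathscr X}$ on $\mathscr X$ and conditional distributions $\rho_{\mathscr Y|x}$; the regression function is $f_\rho(x)=\int_{\mathscr Y}y\,d\rho_{\mathscr Y|x}(y)$. It is assumed that $\operatorname{supp}\rho\subseteq\mathscr X\times[-M_\rho,M_\rho]$ for a constant $M_\rho\ge0$. $K:\mathscr X\times\mathscr X\to\mathbb R$ is a Mercer kernel (continuous, symmetric, positive semidefinite) with $\kappa:=\sup_{x\in\mathscr X}\sqrt{K(x,x)}<\infty$; $K_x:=K(x,\cdot)$; $\mathscr H_K$ is the associated reproducing kernel Hilbert space with inner product $\langle\cdot,\cdot\rangle_K$, norm $\|\cdot\|_K$ and reproducing property $f(x)=\langle f,K_x\rangle_K$. $\|\cdot\|_\rho$ is the norm of $L^2_{\rho_{\mathscr X}}$. $L_Kf(x)=\int_{\mathscr X}K(x,u)f(u)\,d\rho_{\mathscr X}(u)$; as an operator on $L^2_{\rho_{\mathscr X}}$ it is compact, positive and self-adjoint, and all its eigenvalues are assumed positive; powers $L_K^r$ ($r>0$) are defined through its orthonormal eigensystem. The statement "$L_K^{-r}f_\rho\in L^2_{\rho_{\mathscr X}}$" means $f_\rho=L_K^rg$ for some $g\in L^2_{\rho_{\mathscr X}}$, and then $\|L_K^{-r}f_\rho\|_\rho:=\|g\|_\rho$. For $\lambda>0$, $f_\lambda:=(L_K+\lambda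 I)^{-1}L_Kf_\rho\in\mathscr H_K$ (the minimizer over $\mathscr H_K$ of $\int(f(x)-y)^2\,d\rho+\lambda\|f\|_K^2$). Online algorithm. $(x_t,y_t)_{t\ge1}$ are i.i.d. with law $\rho$; given $f_0\in\mathscr H_K$ and positive sequences $(\gamma_t)$, $(\lambda_t)$, define for $t\ge1$: $f_t=f_{t-1}-\gamma_t\big[(f_{t-1}(x_t)-y_t)K_{x_t}+\lambda_tf_{t-1}\big]$.
   Formalization: Every element of $\mathscr H_K$ that vanishes $\rho_{\mathscr X}$-almost everywhere is also assumed to be zero, so $\mathscr H_K$ embeds injectively into $L^2_{\rho_{\mathscr X}}$. The paper assumes this as well. *)

theory Defs
  imports "HOL-Probability.Probability"
begin

text \<open>Abstract RKHS: the Hilbert space type 'h is identified with H_K through the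
evaluation map evl (evl f x = f(x)); kx x is K_x. Reproducing property, K_x(u) = K(x,u),
density of the span of the K_x (so 'h is exactly H_K, up to isometric isomorphism), and
functions are considered on X only (normalised to 0 off X).\<close>
definition rkhs_of :: "'a set \<Rightarrow> ('a \<Rightarrow> 'a \<Rightarrow> real) \<Rightarrow> ('h::{real_inner,complete_space} \<Rightarrow> 'a \<Rightarrow> real)
    \<Rightarrow> ('a \<Rightarrow> 'h) \<Rightarrow> bool" where
  "rkhs_of X K evl kx \<longleftrightarrow>
     (\<forall>f. \<forall>x\<in>X. evl f x = inner f (kx x)) \<and>
     (\<forall>x\<in>X. \<forall>u\<in>X. evl (kx x) u = K x u) \<and>
     (\<forall>f. \<forall>x. x \<notin> X \<longrightarrow> evl f x = 0) \<and>
     closure (span (kx ` X)) = UNIV"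

text \<open>Mercer kernel with finite kappa (symmetry and positive semidefiniteness follow from
the RKHS representation K x u = inner (kx x) (kx u)).\<close>
definition mercer_bounded :: "'a::topological_space set \<Rightarrow> ('a \<Rightarrow> 'a \<Rightarrow> real) \<Rightarrow> bool" where
  "mercer_bounded X K \<longleftrightarrow>
     continuous_on (X \<times> X) (\<lambda>(x, u). K x u) \<and>
     (\<forall>x\<in>X. \<forall>u\<in>X. K x u = K u x) \<and>
     (\<forall>n (c::nat \<Rightarrow> real) (p::nat \<Rightarrow> 'a). (\<forall>i<n. p i \<in> X) \<longrightarrow>
        0 \<le> (\<Sum>i<n. \<Sum>j<n. c i * c j * K (p i) (p j))) \<and>
     (\<exists>\<kappa>. \<forall>x\<in>X. sqrt (K x x) \<le> \<kappa>)"

definition marginal :: "('a::topological_space \<times> real) measure \<Rightarrow> 'a measure" where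
  "marginal \<rho> = distr \<rho> borel fst"

text \<open>g is (a version of) the regression function x \<mapsto> \<integral> y d\<rho>(y|x):
the defining property of the conditional expectation of y given x.\<close>
definition is_regression_fn :: "('a::topological_space \<times> real) measure \<Rightarrow> ('a \<Rightarrow> real) \<Rightarrow> bool" where
  "is_regression_fn \<rho> g \<longleftrightarrow>
     g \<in> borel_measurable borel \<and> integrable \<rho> (\<lambda>z. g (fst z)) \<and>
     (\<forall>A \<in> sets borel. (\<integral>z. indicator A (fst z) * snd z \<partial>\<rho>) = (\<integral>z. indicator A (fst z) * g (fst z) \<partial>\<rho>))"

text \<open>All eigenvalues of L_K on L^2(rho_X) are positive, i.e. L_K (a positive operator)
has trivial kernel.\<close>
definition LK_strictly_positive :: "('a::topological_space \<times> real) measure \<Rightarrow> ('a \<Rightarrow> 'a \<Rightarrow> real) \<Rightarrow> bool" where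
  "LK_strictly_positive \<rho> K \<longleftrightarrow>
     (\<forall>g \<in> borel_measurable borel. integrable (marginal \<rho>) (\<lambda>u. (g u)\<^sup>2) \<longrightarrow>
        (AE x in marginal \<rho>. (\<integral>u. K x u * g u \<partial>marginal \<rho>) = 0) \<longrightarrow>
        (AE u in marginal \<rho>. g u = 0))"

definition reg_risk :: "('a \<times> real) measure \<Rightarrow> ('h::real_normed_vector \<Rightarrow> 'a \<Rightarrow> real) \<Rightarrow> real \<Rightarrow> 'h \<Rightarrow> real" where
  "reg_risk \<rho> evl l f = (\<integral>z. (evl f (fst z) - snd z)\<^sup>2 \<partial>\<rho>) + l * (norm f)\<^sup>2"

fun online :: "'h::real_vector \<Rightarrow> (nat \<Rightarrow> real) \<Rightarrow> (nat \<Rightarrow> real) \<Rightarrow> ('a \<Rightarrow> 'h) \<Rightarrow> ('h \<Rightarrow> 'a \<Rightarrow> real)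
    \<Rightarrow> (nat \<Rightarrow> 'a \<times> real) \<Rightarrow> nat \<Rightarrow> 'h" where
  "online f0 \<gamma> lam kx evl z 0 = f0"
| "online f0 \<gamma> lam kx evl z (Suc t) =
     (let f = online f0 \<gamma> lam kx evl z t; x = fst (z (Suc t)); y = snd (z (Suc t)) in
      f - \<gamma> (Suc t) *\<^sub>R ((evl f x - y) *\<^sub>R kx x + lam (Suc t) *\<^sub>R f))"

end

theory Submission
  imports Defs
begin


lemma sum_lessThan_add_split:
  "(\<Sum>i<n+m. f i) = (\<Sum>i<n. f i) + (\<Sum>i<m. f (n+i))" for n m :: nat
  by (induction m) (auto simp: add.assoc)

locale rk =
  fixes X :: "'a::euclidean_space set"
    and K :: "'a \<Rightarrow> 'a \<Rightarrow> real"
    and evl :: "'h::{real_inner,complete_space} \<Rightarrow> 'a \<Rightarrow> real"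
    and kx :: "'a \<Rightarrow> 'h"
  assumes X_closed: "closed X"
    and mercer: "mercer_bounded X K"
    and rkhs: "rkhs_of X K evl kx"
begin

definition kxc :: "'a \<Rightarrow> 'h" where "kxc x = (if x \<in> X then kx x else 0)"

definition kap :: real where "kap = (SOME k. k \<ge> 1 \<and> (\<forall>x\<in>X. sqrt (K x x) \<le> k))"

lemma kap: "kap \<ge> 1" "\<And>x. x \<in> X \<Longrightarrow> sqrt (K x x) \<le> kap"
proof -
  obtain k where k: "\<forall>x\<in>X. sqrt (K x x) \<le> k" using mercer unfolding mercer_bounded_def by blast
  have "\<exists>k. k \<ge> 1 \<and> (\<forall>x\<in>X. sqrt (K x x) \<le> k)"
    by (rule exI[of _ "max k 1"]) (use k in auto)
  from someI_ex[OF this] show "kap \<ge> 1" "\<And>x. x \<in> X \<Longrightarrow> sqrt (K x x) \<le> kap"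
    unfolding kap_def by auto
qed

lemma evl_inner: "evl f x = inner f (kxc x)"
  using rkhs unfolding rkhs_of_def kxc_def by auto

lemma K_inner: "x \<in> X \<Longrightarrow> u \<in> X \<Longrightarrow> K x u = inner (kx x) (kx u)"
proof -
  assume "x \<in> X" "u \<in> X"
  then have "evl (kx x) u = inner (kx x) (kx u)" "evl (kx x) u = K x u"
    using rkhs unfolding rkhs_of_def by auto
  then show ?thesis by simp
qed

lemma norm_kxc: "norm (kxc x) \<le> kap"
proof (cases "x \<in> X")
  case True
  have "norm (kx x) = sqrt (K x x)"
    using K_inner[OF True True] by (simp add: norm_eq_sqrt_inner)
  then show ?thesis using kap True by (simp add: kxc_def)
next
  case False then show ?thesis using kap by (simp add: kxc_def)
qed

lemma kap_nonneg: "kap \<ge> 0" using kap by simp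

lemma abs_evl: "\<bar>evl f x\<bar> \<le> norm f * kap"
proof -
  have "\<bar>evl f x\<bar> \<le> norm f * norm (kxc x)"
    unfolding evl_inner by (rule Cauchy_Schwarz_ineq2)
  also have "\<dots> \<le> norm f * kap" by (rule mult_left_mono[OF norm_kxc]) simp
  finally show ?thesis .
qed

lemma evl_add: "evl (f + g) x = evl f x + evl g x"
  and evl_diff: "evl (f - g) x = evl f x - evl g x"
  and evl_scale: "evl (c *\<^sub>R f) x = c * evl f x"
  and evl_minus: "evl (- f) x = - evl f x"
  and evl_zero: "evl 0 x = 0"
  by (simp_all add: evl_inner inner_add_left inner_diff_left)

lemma K_cont: "continuous_on (X \<times> X) (\<lambda>(x, u). K x u)"
  using mercer unfolding mercer_bounded_def by blast

lemma kx_cont: "continuous_on X kx"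
proof (clarsimp simp: continuous_on_def)
  fix x assume x: "x \<in> X"
  have "continuous_on X (\<lambda>u. (\<lambda>(x, u). K x u) (u, u))"
    by (rule continuous_on_compose2[OF K_cont]) (auto intro!: continuous_intros)
  then have c1: "continuous_on X (\<lambda>u. K u u)" by simp
  have "continuous_on X (\<lambda>u. (\<lambda>(x, u). K x u) (x, u))"
    by (rule continuous_on_compose2[OF K_cont]) (use x in \<open>auto intro!: continuous_intros\<close>)
  then have c2: "continuous_on X (\<lambda>u. K x u)" by simp
  have "((\<lambda>u. K u u - 2 * K x u + K x x) \<longlongrightarrow> K x x - 2 * K x x + K x x) (at x within X)"
    by (intro tendsto_intros) (use c1 c2 x in \<open>auto simp: continuous_on_def\<close>)
  then have t1: "((\<lambda>u. K u u - 2 * K x u + K x x) \<longlongrightarrow> 0) (at x within X)" by simp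
  have eq: "\<forall>\<^sub>F u in at x within X. K u u - 2 * K x u + K x x = (norm (kx u - kx x))\<^sup>2"
    unfolding eventually_at_filter
  proof (rule always_eventually, intro allI impI)
    fix u assume "u \<in> X"
    then show "K u u - 2 * K x u + K x x = (norm (kx u - kx x))\<^sup>2"
      using x by (simp add: power2_norm_eq_inner K_inner inner_diff_left inner_diff_right inner_commute)
  qed
  have "((\<lambda>u. (norm (kx u - kx x))\<^sup>2) \<longlongrightarrow> 0) (at x within X)"
    using tendsto_cong[OF eq] t1 by simp
  then have "((\<lambda>u. sqrt ((norm (kx u - kx x))\<^sup>2)) \<longlongrightarrow> sqrt 0) (at x within X)"
    by (intro tendsto_intros)
  then have "((\<lambda>u. norm (kx u - kx x)) \<longlongrightarrow> 0) (at x within X)" by simp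
  then show "(kx \<longlongrightarrow> kx x) (at x within X)"
    by (simp add: tendsto_norm_zero_iff LIM_zero_iff)
qed

lemma evl_meas: "evl f \<in> borel_measurable borel"
proof -
  have "(\<lambda>x. if x \<in> X then inner f (kx x) else 0) \<in> borel_measurable borel"
    by (rule borel_measurable_continuous_on_if)
       (use X_closed kx_cont in \<open>auto intro!: continuous_intros\<close>)
  moreover have "evl f = (\<lambda>x. if x \<in> X then inner f (kx x) else 0)"
    by (auto simp: fun_eq_iff evl_inner kxc_def)
  ultimately show ?thesis by simp
qed

definition Kc :: "'a \<times> 'a \<Rightarrow> real" where "Kc p = inner (kxc (fst p)) (kxc (snd p))"

lemma Kc_meas: "Kc \<in> borel_measurable borel"
proof -
  have "(\<lambda>p. if p \<in> X \<times> X then K (fst p) (snd p) else 0) \<in> borel_measurable borel"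
    by (rule borel_measurable_continuous_on_if)
       (use X_closed K_cont in \<open>auto intro!: continuous_intros closed_Times borel_closed simp: case_prod_beta\<close>)
  moreover have "Kc = (\<lambda>p. if p \<in> X \<times> X then K (fst p) (snd p) else 0)"
    by (auto simp: fun_eq_iff Kc_def kxc_def K_inner)
  ultimately show ?thesis by simp
qed


definition atom :: "bool \<Rightarrow> 'a \<Rightarrow> 'h \<Rightarrow> 'h" where
  "atom c b v = (if c then kxc b else v)"

definition hrep :: "'p measure \<Rightarrow> ('p \<Rightarrow> 'h) \<Rightarrow> bool" where
  "hrep N F \<longleftrightarrow> (\<exists>(n::nat) a b v c. (\<forall>i<n. a i \<in> borel_measurable N \<and> b i \<in> N \<rightarrow>\<^sub>M borel) \<and>
      (\<forall>p\<in>space N. F p = (\<Sum>i<n. a i p *\<^sub>R atom (c i) (b i p) (v i))))"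

lemma Kc_comp_meas:
  assumes "b \<in> N \<rightarrow>\<^sub>M borel" "b' \<in> N \<rightarrow>\<^sub>M borel"
  shows "(\<lambda>p. inner (kxc (b p)) (kxc (b' p))) \<in> borel_measurable N"
proof -
  have "(\<lambda>p. Kc (b p, b' p)) \<in> borel_measurable N"
    by (rule measurable_compose[OF _ Kc_meas]) (use assms in \<open>simp add: borel_prod[symmetric]\<close>)
  then show ?thesis by (simp add: Kc_def)
qed

lemma atom_inner_meas:
  assumes "b \<in> N \<rightarrow>\<^sub>M borel" "b' \<in> N \<rightarrow>\<^sub>M borel"
  shows "(\<lambda>p. inner (atom c (b p) v) (atom c' (b' p) v')) \<in> borel_measurable N"
proof -
  have e1: "(\<lambda>p. evl v' (b p)) \<in> borel_measurable N" "(\<lambda>p. evl v (b' p)) \<in> borel_measurable N"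
    using measurable_compose[OF assms(1) evl_meas] measurable_compose[OF assms(2) evl_meas] by auto
  show ?thesis
    using Kc_comp_meas[OF assms] e1
    by (cases c; cases c') (auto simp: atom_def evl_inner inner_commute)
qed

lemma rep_inner:
  assumes "hrep N F" "hrep N G"
  shows "(\<lambda>p. inner (F p) (G p)) \<in> borel_measurable N"
proof -
  obtain n :: nat and a b v c where A: "\<forall>i<n. a i \<in> borel_measurable N \<and> b i \<in> N \<rightarrow>\<^sub>M borel"
    and FA: "\<forall>p\<in>space N. F p = (\<Sum>i<n. a i p *\<^sub>R atom (c i) (b i p) (v i))"
    using assms(1) unfolding hrep_def by (elim exE conjE) (rule that, assumption+)
  obtain m :: nat and a' b' v' c' where B: "\<forall>i<m. a' i \<in> borel_measurable N \<and> b' i \<in> N \<rightarrow>\<^sub>M borel"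
    and GB: "\<forall>p\<in>space N. G p = (\<Sum>i<m. a' i p *\<^sub>R atom (c' i) (b' i p) (v' i))"
    using assms(2) unfolding hrep_def by (elim exE conjE) (rule that, assumption+)
  have m: "(\<lambda>p. \<Sum>j<m. a' j p * (\<Sum>i<n. a i p * inner (atom (c i) (b i p) (v i)) (atom (c' j) (b' j p) (v' j))))
        \<in> borel_measurable N"
    using A B by (intro borel_measurable_sum borel_measurable_times atom_inner_meas) auto
  have eq: "\<forall>p\<in>space N. inner (F p) (G p) =
     (\<Sum>j<m. a' j p * (\<Sum>i<n. a i p * inner (atom (c i) (b i p) (v i)) (atom (c' j) (b' j p) (v' j))))"
    apply (intro ballI)
    subgoal for p using FA[rule_format, of p] GB[rule_format, of p]
      by (simp only: inner_sum_left inner_sum_right inner_scaleR_left inner_scaleR_right)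
    done
  show ?thesis
    by (rule measurable_cong[THEN iffD2, OF _ m]) (use eq in blast)
qed

lemma rep_cong:
  assumes "hrep N F" "\<And>p. p \<in> space N \<Longrightarrow> F p = G p" shows "hrep N G"
proof -
  obtain n :: nat and a b v c where A: "\<forall>i<n. a i \<in> borel_measurable N \<and> b i \<in> N \<rightarrow>\<^sub>M borel"
    and FA: "\<forall>p\<in>space N. F p = (\<Sum>i<n. a i p *\<^sub>R atom (c i) (b i p) (v i))"
    using assms(1) unfolding hrep_def by (elim exE conjE) (rule that, assumption+)
  have "\<forall>p\<in>space N. G p = (\<Sum>i<n. a i p *\<^sub>R atom (c i) (b i p) (v i))"
    using FA assms(2) by simp
  then show ?thesis unfolding hrep_def using A
    by (intro exI[of _ n] exI[of _ a] exI[of _ b] exI[of _ v] exI[of _ c] conjI)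
qed

lemma rep_add:
  assumes "hrep N F" "hrep N G"
  shows "hrep N (\<lambda>p. F p + G p)"
proof -
  obtain n :: nat and a b v c where A: "\<forall>i<n. a i \<in> borel_measurable N \<and> b i \<in> N \<rightarrow>\<^sub>M borel"
    and FA: "\<forall>p\<in>space N. F p = (\<Sum>i<n. a i p *\<^sub>R atom (c i) (b i p) (v i))"
    using assms(1) unfolding hrep_def by (elim exE conjE) (rule that, assumption+)
  obtain m :: nat and a' b' v' c' where B: "\<forall>i<m. a' i \<in> borel_measurable N \<and> b' i \<in> N \<rightarrow>\<^sub>M borel"
    and GB: "\<forall>p\<in>space N. G p = (\<Sum>i<m. a' i p *\<^sub>R atom (c' i) (b' i p) (v' i))"
    using assms(2) unfolding hrep_def by (elim exE conjE) (rule that, assumption+)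
  define a2 where "a2 i = (if i < n then a i else a' (i - n))" for i
  define b2 where "b2 i = (if i < n then b i else b' (i - n))" for i
  define v2 where "v2 i = (if i < n then v i else v' (i - n))" for i
  define c2 where "c2 i = (if i < n then c i else c' (i - n))" for i
  have "\<forall>i<n+m. a2 i \<in> borel_measurable N \<and> b2 i \<in> N \<rightarrow>\<^sub>M borel"
    using A B by (auto simp: a2_def b2_def)
  moreover have "\<forall>p\<in>space N. F p + G p = (\<Sum>i<n+m. a2 i p *\<^sub>R atom (c2 i) (b2 i p) (v2 i))"
    using FA GB by (simp add: sum_lessThan_add_split a2_def b2_def c2_def v2_def)
  ultimately show ?thesis unfolding hrep_def by (intro exI[of _ "n+m"] exI[of _ a2] exI[of _ b2] exI[of _ v2] exI[of _ c2] conjI)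
qed

lemma rep_scale:
  assumes "hrep N F" "f \<in> borel_measurable N"
  shows "hrep N (\<lambda>p. f p *\<^sub>R F p)"
proof -
  obtain n :: nat and a b v c where A: "\<forall>i<n. a i \<in> borel_measurable N \<and> b i \<in> N \<rightarrow>\<^sub>M borel"
    and FA: "\<forall>p\<in>space N. F p = (\<Sum>i<n. a i p *\<^sub>R atom (c i) (b i p) (v i))"
    using assms(1) unfolding hrep_def by (elim exE conjE) (rule that, assumption+)
  have "\<forall>i<n. (\<lambda>p. f p * a i p) \<in> borel_measurable N \<and> b i \<in> N \<rightarrow>\<^sub>M borel"
    using A assms(2) by auto
  moreover have "\<forall>p\<in>space N. f p *\<^sub>R F p = (\<Sum>i<n. (f p * a i p) *\<^sub>R atom (c i) (b i p) (v i))"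
    using FA by (simp add: scaleR_sum_right)
  ultimately show ?thesis unfolding hrep_def by (intro exI[of _ n] exI[of _ "\<lambda>i p. f p * a i p"] exI[of _ b] exI[of _ v] exI[of _ c] conjI)
qed

lemma rep_const: "hrep N (\<lambda>p. v)"
proof -
  have "\<forall>i<1::nat. (\<lambda>p. 1::real) \<in> borel_measurable N \<and> (\<lambda>p. undefined::'a) \<in> N \<rightarrow>\<^sub>M borel" by auto
  moreover have "\<forall>p\<in>space N. v = (\<Sum>i<1::nat. (\<lambda>i p. 1::real) i p *\<^sub>R atom ((\<lambda>i. False) i) ((\<lambda>i p. undefined) i p) ((\<lambda>i. v) i))"
    by (simp add: atom_def)
  ultimately show ?thesis unfolding hrep_def by (intro exI[of _ "1::nat"] exI[of _ "\<lambda>i p. 1::real"] exI[of _ "\<lambda>i p. undefined"] exI[of _ "\<lambda>i. v"] exI[of _ "\<lambda>i. False"] conjI)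
qed

lemma rep_kxc: assumes "b \<in> N \<rightarrow>\<^sub>M borel" shows "hrep N (\<lambda>p. kxc (b p))"
proof -
  have "\<forall>i<1::nat. (\<lambda>p. 1::real) \<in> borel_measurable N \<and> (\<lambda>i. b) i \<in> N \<rightarrow>\<^sub>M borel" using assms by auto
  moreover have "\<forall>p\<in>space N. kxc (b p) = (\<Sum>i<1::nat. (\<lambda>i p. 1::real) i p *\<^sub>R atom ((\<lambda>i. True) i) ((\<lambda>i. b) i p) ((\<lambda>i. 0) i))"
    by (simp add: atom_def)
  ultimately show ?thesis unfolding hrep_def by (intro exI[of _ "1::nat"] exI[of _ "\<lambda>i p. 1::real"] exI[of _ "\<lambda>i. b"] exI[of _ "\<lambda>i. 0"] exI[of _ "\<lambda>i. True"] conjI)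
qed

lemma rep_diff: "hrep N F \<Longrightarrow> hrep N G \<Longrightarrow> hrep N (\<lambda>p. F p - G p)"
  using rep_add[of N F "\<lambda>p. (-1) *\<^sub>R G p"] rep_scale[of N G "\<lambda>_. -1"] by simp

lemma rep_norm2: "hrep N F \<Longrightarrow> (\<lambda>p. (norm (F p))\<^sup>2) \<in> borel_measurable N"
  using rep_inner[of N F F] by (simp add: power2_norm_eq_inner)

lemma rep_evl: assumes "hrep N F" "b \<in> N \<rightarrow>\<^sub>M borel" shows "(\<lambda>p. evl (F p) (b p)) \<in> borel_measurable N"
  using rep_inner[OF assms(1) rep_kxc[OF assms(2)]] by (simp add: evl_inner)

lemma rep_online:
  assumes "\<And>s. s \<ge> 1 \<Longrightarrow> zz s \<in> N \<rightarrow>\<^sub>M borel"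
  shows "hrep N (\<lambda>p. online f0 g l kxc evl (\<lambda>s. zz s p) t)"
proof (induction t)
  case 0 then show ?case by (simp add: rep_const)
next
  case (Suc t)
  have z: "zz (Suc t) \<in> N \<rightarrow>\<^sub>M borel \<Otimes>\<^sub>M borel" using assms[of "Suc t"] by (simp add: borel_prod)
  have fx: "(\<lambda>p. fst (zz (Suc t) p)) \<in> N \<rightarrow>\<^sub>M borel" using measurable_compose[OF z measurable_fst] by simp
  have sy: "(\<lambda>p. snd (zz (Suc t) p)) \<in> borel_measurable N" using measurable_compose[OF z measurable_snd] by simp
  let ?F = "\<lambda>p. online f0 g l kxc evl (\<lambda>s. zz s p) t"
  have e: "(\<lambda>p. evl (?F p) (fst (zz (Suc t) p))) \<in> borel_measurable N"
    by (rule rep_evl[OF Suc fx])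
  have "hrep N (\<lambda>p. ?F p - g (Suc t) *\<^sub>R ((evl (?F p) (fst (zz (Suc t) p)) - snd (zz (Suc t) p)) *\<^sub>R kxc (fst (zz (Suc t) p)) + l (Suc t) *\<^sub>R ?F p))"
    by (intro rep_diff Suc rep_scale rep_add rep_kxc fx borel_measurable_diff e sy) auto
  then show ?case by (simp add: Let_def)
qed

end



lemma norm_add_sq_le: fixes x y :: "'a::real_normed_vector"
  shows "(norm (x + y))\<^sup>2 \<le> 2 * (norm x)\<^sup>2 + 2 * (norm y)\<^sup>2"
proof -
  have "(norm (x + y))\<^sup>2 \<le> (norm x + norm y)\<^sup>2" by (rule power_mono[OF norm_triangle_ineq]) simp
  also have "\<dots> \<le> 2 * (norm x)\<^sup>2 + 2 * (norm y)\<^sup>2"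
    using zero_le_power2[of "norm x - norm y"] by (simp add: power2_eq_square algebra_simps)
  finally show ?thesis .
qed

lemma step_alg:
  fixes w k \<xi> :: "'a::real_inner"
  assumes g: "g > 0" and gK: "g * K2 \<le> q" and k: "(norm k)\<^sup>2 \<le> K2" and xi: "(norm \<xi>)\<^sup>2 \<le> C"
  shows "(norm (q *\<^sub>R w - g *\<^sub>R (inner w k *\<^sub>R k + \<xi>)))\<^sup>2 \<le> q\<^sup>2 * (norm w)\<^sup>2 - 2 * q * g * inner w \<xi> + 2 * g\<^sup>2 * C"
proof -
  define a where "a = inner w k"
  have e: "(norm (q *\<^sub>R w - g *\<^sub>R (a *\<^sub>R k + \<xi>)))\<^sup>2 =
      q\<^sup>2 * (norm w)\<^sup>2 - 2 * q * g * (a * a + inner w \<xi>) + g\<^sup>2 * (norm (a *\<^sub>R k + \<xi>))\<^sup>2"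
    unfolding power2_norm_eq_inner
    by (simp add: inner_diff_left inner_diff_right inner_add_left inner_add_right a_def inner_commute
        algebra_simps power2_eq_square)
  have n: "(norm (a *\<^sub>R k + \<xi>))\<^sup>2 \<le> 2 * (a * a * K2) + 2 * C"
  proof -
    have "(norm (a *\<^sub>R k))\<^sup>2 = a * a * (norm k)\<^sup>2" by (simp add: power2_eq_square)
    also have "\<dots> \<le> a * a * K2" by (rule mult_left_mono[OF k]) simp
    finally have "(norm (a *\<^sub>R k))\<^sup>2 \<le> a * a * K2" .
    then show ?thesis using norm_add_sq_le[of "a *\<^sub>R k" \<xi>] xi by linarith
  qed
  have "g\<^sup>2 * (norm (a *\<^sub>R k + \<xi>))\<^sup>2 \<le> g\<^sup>2 * (2 * (a * a * K2) + 2 * C)"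
    by (rule mult_left_mono[OF n]) simp
  moreover have "g\<^sup>2 * (a * a * K2) \<le> q * g * (a * a)"
  proof -
    have "g * (g * K2) * (a * a) \<le> g * q * (a * a)"
      using gK g by (intro mult_right_mono mult_left_mono) auto
    then show ?thesis by (simp add: power2_eq_square algebra_simps)
  qed
  ultimately show ?thesis unfolding e[folded a_def] a_def[symmetric] by (simp add: algebra_simps)
qed

locale rk2 = rk X K evl kx
  for X :: "'a::euclidean_space set"
    and K :: "'a \<Rightarrow> 'a \<Rightarrow> real"
    and evl :: "'h::{real_inner,complete_space} \<Rightarrow> 'a \<Rightarrow> real"
    and kx :: "'a \<Rightarrow> 'h" +
  fixes \<rho> :: "('a \<times> real) measure" and M :: real and fr :: 'h and flam :: "real \<Rightarrow> 'h"
  assumes rho_prob: "prob_space \<rho>" and rho_sets: "sets \<rho> = sets borel"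
    and M_nonneg: "0 \<le> M"
    and supp: "AE z in \<rho>. fst z \<in> X \<and> \<bar>snd z\<bar> \<le> M"
    and embed: "\<And>h. (AE x in marginal \<rho>. evl h x = 0) \<Longrightarrow> h = 0"
    and regr: "is_regression_fn \<rho> (evl fr)"
    and flam_min: "\<And>l f. l > 0 \<Longrightarrow> reg_risk \<rho> evl l (flam l) \<le> reg_risk \<rho> evl l f"
begin

interpretation rho: prob_space \<rho> by (rule rho_prob)

lemma meas_rho_eq: "measurable \<rho> N = measurable borel N"
  by (rule measurable_cong_sets[OF rho_sets refl])

lemma meas_rho_iff: "f \<in> \<rho> \<rightarrow>\<^sub>M N \<longleftrightarrow> f \<in> borel \<rightarrow>\<^sub>M N"
  by (simp add: meas_rho_eq)

lemma fst_meas: "fst \<in> \<rho> \<rightarrow>\<^sub>M borel"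
  unfolding meas_rho_iff using measurable_fst[of "borel::'a measure" "borel::real measure"]
  by (simp add: borel_prod)

lemma snd_meas: "snd \<in> \<rho> \<rightarrow>\<^sub>M borel"
  unfolding meas_rho_iff using measurable_snd[of "borel::'a measure" "borel::real measure"]
  by (simp add: borel_prod)

lemma evl_fst_meas[measurable]: "(\<lambda>z. evl v (fst z)) \<in> borel_measurable \<rho>"
  by (rule measurable_compose[OF fst_meas evl_meas])

lemma snd_meas'[measurable]: "(\<lambda>z. snd z) \<in> borel_measurable \<rho>"
  using snd_meas by simp

lemma int_bdd:
  fixes B :: real
  assumes "f \<in> borel_measurable \<rho>" "\<And>z. fst z \<in> X \<Longrightarrow> \<bar>snd z\<bar> \<le> M \<Longrightarrow> \<bar>f z\<bar> \<le> B"
  shows "integrable \<rho> f"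
proof (rule rho.integrable_const_bound[where B=B])
  show "AE z in \<rho>. norm (f z) \<le> B" using supp by eventually_elim (use assms(2) in auto)
qed (rule assms(1))

lemma int_evl2: "integrable \<rho> (\<lambda>z. evl a (fst z) * evl b (fst z))"
proof (rule int_bdd)
  fix z :: "'a \<times> real"
  have "\<bar>evl a (fst z) * evl b (fst z)\<bar> \<le> (norm a * kap) * (norm b * kap)"
    unfolding abs_mult by (intro mult_mono abs_evl) (auto simp: kap_nonneg)
  then show "\<bar>evl a (fst z) * evl b (fst z)\<bar> \<le> (norm a * kap) * (norm b * kap)" .
qed simp

lemma int_evly: "integrable \<rho> (\<lambda>z. (evl a (fst z) - snd z) * evl b (fst z))"
proof (rule int_bdd)
  fix z :: "'a \<times> real" assume z: "\<bar>snd z\<bar> \<le> M"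
  have "\<bar>evl a (fst z) - snd z\<bar> \<le> norm a * kap + M"
    using abs_evl[of a "fst z"] z by linarith
  then show "\<bar>(evl a (fst z) - snd z) * evl b (fst z)\<bar> \<le> (norm a * kap + M) * (norm b * kap)"
    unfolding abs_mult by (intro mult_mono abs_evl) (auto simp: kap_nonneg)
qed simp


lemma int_evly2: "integrable \<rho> (\<lambda>z. (evl a (fst z) - snd z)\<^sup>2)"
proof (rule int_bdd)
  fix z :: "'a \<times> real" assume z: "\<bar>snd z\<bar> \<le> M"
  have "\<bar>evl a (fst z) - snd z\<bar> \<le> norm a * kap + M"
    using abs_evl[of a "fst z"] z by linarith
  then have "\<bar>evl a (fst z) - snd z\<bar>\<^sup>2 \<le> (norm a * kap + M)\<^sup>2"
    by (rule power_mono) simp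
  then show "\<bar>(evl a (fst z) - snd z)\<^sup>2\<bar> \<le> (norm a * kap + M)\<^sup>2"
    by simp
qed simp

lemma quad_min_zero:
  fixes A B :: real
  assumes "B \<ge> 0" "\<And>e. 0 \<le> 2 * e * A + e\<^sup>2 * B"
  shows "A = 0"
proof (rule ccontr)
  assume A: "A \<noteq> 0"
  define t where "t = 1 / (B + 1)"
  have t: "t > 0" "t * B < 2" using assms(1) by (auto simp: t_def field_simps)
  have "2 * (- t * A) * A + (- t * A)\<^sup>2 * B = A\<^sup>2 * (t * (t * B - 2))"
    by (simp add: power2_eq_square algebra_simps)
  also have "\<dots> < 0"
    using A t by (intro mult_pos_neg mult_pos_neg) auto
  finally show False using assms(2)[of "- t * A"] by simp
qed

lemma risk_expand:
  "reg_risk \<rho> evl l (f + e *\<^sub>R v) = reg_risk \<rho> evl l f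
     + 2 * e * ((\<integral>z. (evl f (fst z) - snd z) * evl v (fst z) \<partial>\<rho>) + l * inner f v)
     + e\<^sup>2 * ((\<integral>z. evl v (fst z) * evl v (fst z) \<partial>\<rho>) + l * (norm v)\<^sup>2)"
proof -
  have pt: "(evl (f + e *\<^sub>R v) (fst z) - snd z)\<^sup>2 =
      (evl f (fst z) - snd z)\<^sup>2 + (2 * e) * ((evl f (fst z) - snd z) * evl v (fst z))
       + e\<^sup>2 * (evl v (fst z) * evl v (fst z))" for z
    by (simp add: evl_add evl_scale power2_eq_square algebra_simps)
  have I: "(\<integral>z. (evl (f + e *\<^sub>R v) (fst z) - snd z)\<^sup>2 \<partial>\<rho>) =
      (\<integral>z. (evl f (fst z) - snd z)\<^sup>2 \<partial>\<rho>) + (2 * e) * (\<integral>z. (evl f (fst z) - snd z) * evl v (fst z) \<partial>\<rho>)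
       + e\<^sup>2 * (\<integral>z. evl v (fst z) * evl v (fst z) \<partial>\<rho>)"
    unfolding pt using int_evly2[of f] int_evly[of f v] int_evl2[of v v] by simp
  have N: "(norm (f + e *\<^sub>R v))\<^sup>2 = (norm f)\<^sup>2 + 2 * e * inner f v + e\<^sup>2 * (norm v)\<^sup>2"
    by (simp only: power2_norm_eq_inner) (simp add: inner_add_left inner_add_right inner_commute algebra_simps power2_eq_square)
  show ?thesis unfolding reg_risk_def I N by (simp add: algebra_simps)
qed

lemma foc:
  assumes l: "l > 0"
  shows "(\<integral>z. (evl (flam l) (fst z) - snd z) * evl v (fst z) \<partial>\<rho>) + l * inner (flam l) v = 0"
proof (rule quad_min_zero)
  show "0 \<le> (\<integral>z. evl v (fst z) * evl v (fst z) \<partial>\<rho>) + l * (norm v)\<^sup>2"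
    using l by (intro add_nonneg_nonneg integral_nonneg_AE) auto
  fix e :: real
  have "reg_risk \<rho> evl l (flam l) \<le> reg_risk \<rho> evl l (flam l + e *\<^sub>R v)" by (rule flam_min[OF l])
  then show "0 \<le> 2 * e * ((\<integral>z. (evl (flam l) (fst z) - snd z) * evl v (fst z) \<partial>\<rho>) + l * inner (flam l) v)
     + e\<^sup>2 * ((\<integral>z. evl v (fst z) * evl v (fst z) \<partial>\<rho>) + l * (norm v)\<^sup>2)"
    unfolding risk_expand by simp
qed


lemma reg_bounded:
  fixes \<phi> :: "'a \<Rightarrow> real"
  assumes phi[measurable]: "\<phi> \<in> borel_measurable borel" and bd: "\<And>x. \<bar>\<phi> x\<bar> \<le> Bd"
  shows "(\<integral>z. \<phi> (fst z) * (snd z - evl fr (fst z)) \<partial>\<rho>) = 0"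
proof -
  define h where "h z = snd z - evl fr (fst z)" for z :: "'a \<times> real"
  have hm: "h \<in> borel_measurable \<rho>" unfolding h_def by (intro borel_measurable_diff) auto
  have hb: "\<bar>h z\<bar> \<le> M + norm fr * kap" if "\<bar>snd z\<bar> \<le> M" for z
    using abs_evl[of fr "fst z"] that unfolding h_def by linarith
  have hi: "integrable \<rho> h" by (rule int_bdd[OF hm hb])
  have phim: "(\<lambda>z. \<phi> (fst z)) \<in> borel_measurable \<rho>" by (rule measurable_compose[OF fst_meas phi])
  have ind: "(\<integral>z. indicator A (fst z) * h z \<partial>\<rho>) = 0" if A: "A \<in> sets borel" for A
  proof -
    have im: "(\<lambda>z. indicator A (fst z) :: real) \<in> borel_measurable \<rho>"
      using measurable_compose[OF fst_meas borel_measurable_indicator[OF A]] by simp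
    have i1: "integrable \<rho> (\<lambda>z. indicator A (fst z) * snd z)"
    proof (rule int_bdd[where B=M])
      show "(\<lambda>z. indicator A (fst z) * snd z) \<in> borel_measurable \<rho>"
        using im by (intro borel_measurable_times) auto
    qed (auto simp: indicator_def)
    have i2: "integrable \<rho> (\<lambda>z. indicator A (fst z) * evl fr (fst z))"
    proof (rule int_bdd[where B="norm fr * kap"])
      show "(\<lambda>z. indicator A (fst z) * evl fr (fst z)) \<in> borel_measurable \<rho>"
        using im by (intro borel_measurable_times) auto
    qed (use abs_evl kap_nonneg in \<open>auto simp: indicator_def\<close>)
    have "(\<integral>z. indicator A (fst z) * h z \<partial>\<rho>) =
        (\<integral>z. indicator A (fst z) * snd z \<partial>\<rho>) - (\<integral>z. indicator A (fst z) * evl fr (fst z) \<partial>\<rho>)"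
      unfolding h_def right_diff_distrib by (rule Bochner_Integration.integral_diff[OF i1 i2])
    also have "\<dots> = 0" using regr A unfolding is_regression_fn_def by auto
    finally show ?thesis .
  qed
  have phib: "integrable \<rho> (\<lambda>z. \<phi> (fst z) * h z)"
  proof (rule int_bdd[where B="Bd * (M + norm fr * kap)"])
    show "(\<lambda>z. \<phi> (fst z) * h z) \<in> borel_measurable \<rho>" using phim hm by (intro borel_measurable_times)
    fix z :: "'a \<times> real" assume "\<bar>snd z\<bar> \<le> M"
    then show "\<bar>\<phi> (fst z) * h z\<bar> \<le> Bd * (M + norm fr * kap)"
      unfolding abs_mult using bd hb order_trans[OF abs_ge_zero bd] by (intro mult_mono) auto
  qed
  have approx: "\<bar>\<integral>z. \<phi> (fst z) * h z \<partial>\<rho>\<bar> \<le> (\<integral>z. \<bar>h z\<bar> \<partial>\<rho>) / real (Suc n)" for n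
  proof -
    define N where "N = real (Suc n)"
    have N0: "N > 0" by (simp add: N_def)
    define R where "R = {- \<lceil>N * Bd\<rceil> - 1 .. \<lceil>N * Bd\<rceil> + 1}"
    have finR: "finite R" unfolding R_def by simp
    define pn where "pn x = real_of_int \<lfloor>N * \<phi> x\<rfloor> / N" for x
    have fl: "\<lfloor>N * \<phi> x\<rfloor> \<in> R" for x
    proof -
      have b1: "- Bd \<le> \<phi> x" "\<phi> x \<le> Bd" using bd[of x] by (auto simp: abs_le_iff)
      have "N * (- Bd) \<le> N * \<phi> x" "N * \<phi> x \<le> N * Bd"
        using mult_left_mono[OF b1(1), of N] mult_left_mono[OF b1(2), of N] N0 by auto
      then have "- (N * Bd) \<le> N * \<phi> x" "N * \<phi> x \<le> N * Bd" by auto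
      moreover have c: "N * Bd \<le> of_int \<lceil>N * Bd\<rceil>" by (rule le_of_int_ceiling)
      ultimately show ?thesis unfolding R_def
        apply (auto simp: le_floor_iff floor_le_iff)
        using c by linarith+
    qed
    have pm: "pn \<in> borel_measurable borel" unfolding pn_def by measurable
    have Ak: "{y. \<lfloor>N * \<phi> y\<rfloor> = k} \<in> sets borel" for k by measurable
    have pn_sum: "pn x = (\<Sum>k\<in>R. (of_int k / N) * indicator {y. \<lfloor>N * \<phi> y\<rfloor> = k} x)" for x
      using fl[of x] finR by (simp add: pn_def indicator_def of_bool_def if_distrib sum.delta' cong: if_cong)
    have ii: "integrable \<rho> (\<lambda>z. indicator {y. \<lfloor>N * \<phi> y\<rfloor> = k} (fst z) * h z)" for k
    proof (rule int_bdd[where B="M + norm fr * kap"])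
      have "(\<lambda>z. indicator {y. \<lfloor>N * \<phi> y\<rfloor> = k} (fst z) :: real) \<in> borel_measurable \<rho>"
        using measurable_compose[OF fst_meas borel_measurable_indicator[OF Ak[of k]]] by simp
      then show "(\<lambda>z. indicator {y. \<lfloor>N * \<phi> y\<rfloor> = k} (fst z) * h z) \<in> borel_measurable \<rho>"
        using hm by (intro borel_measurable_times)
    qed (use hb kap_nonneg M_nonneg in \<open>auto simp: indicator_def\<close>)
    have "(\<lambda>z. pn (fst z) * h z) = (\<lambda>z. \<Sum>k\<in>R. (of_int k / N) * (indicator {y. \<lfloor>N * \<phi> y\<rfloor> = k} (fst z) * h z))"
      by (simp add: pn_sum sum_distrib_right mult.assoc)
    then have I0: "(\<integral>z. pn (fst z) * h z \<partial>\<rho>) = 0"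
      using ii ind[OF Ak] by (simp add: Bochner_Integration.integral_sum)
    have pni: "integrable \<rho> (\<lambda>z. pn (fst z) * h z)"
    proof -
      have "integrable \<rho> (\<lambda>z. \<Sum>k\<in>R. (of_int k / N) * (indicator {y. \<lfloor>N * \<phi> y\<rfloor> = k} (fst z) * h z))"
        using ii by (intro Bochner_Integration.integrable_sum integrable_mult_right) auto
      then show ?thesis by (simp add: pn_sum sum_distrib_right mult.assoc)
    qed
    have close: "\<bar>\<phi> x - pn x\<bar> \<le> 1 / N" for x
    proof -
      have "real_of_int \<lfloor>N * \<phi> x\<rfloor> \<le> N * \<phi> x" "N * \<phi> x < real_of_int \<lfloor>N * \<phi> x\<rfloor> + 1"
        by linarith+
      then have "\<bar>N * \<phi> x - real_of_int \<lfloor>N * \<phi> x\<rfloor>\<bar> \<le> 1" by linarith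
      then have "\<bar>N * (\<phi> x - pn x)\<bar> \<le> 1" using N0 by (simp add: pn_def right_diff_distrib)
      then have "N * \<bar>\<phi> x - pn x\<bar> \<le> 1" using N0 by (simp add: abs_mult)
      then show ?thesis using N0 by (simp add: field_simps)
    qed
    have "\<bar>\<integral>z. \<phi> (fst z) * h z \<partial>\<rho>\<bar> = \<bar>\<integral>z. (\<phi> (fst z) - pn (fst z)) * h z \<partial>\<rho>\<bar>"
      using Bochner_Integration.integral_diff[OF phib pni] I0 by (simp add: left_diff_distrib)
    also have "\<dots> \<le> (\<integral>z. \<bar>(\<phi> (fst z) - pn (fst z)) * h z\<bar> \<partial>\<rho>)" by (rule integral_abs_bound)
    also have "\<dots> \<le> (\<integral>z. \<bar>h z\<bar> / N \<partial>\<rho>)"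
    proof (rule Bochner_Integration.integral_mono)
      show "integrable \<rho> (\<lambda>z. \<bar>(\<phi> (fst z) - pn (fst z)) * h z\<bar>)"
        using phib pni by (intro integrable_abs) (simp add: left_diff_distrib)
      show "integrable \<rho> (\<lambda>z. \<bar>h z\<bar> / N)" using hi by simp
      fix z
      have "\<bar>(\<phi> (fst z) - pn (fst z)) * h z\<bar> \<le> (1 / N) * \<bar>h z\<bar>"
        unfolding abs_mult by (rule mult_right_mono[OF close]) simp
      then show "\<bar>(\<phi> (fst z) - pn (fst z)) * h z\<bar> \<le> \<bar>h z\<bar> / N" by simp
    qed
    also have "\<dots> = (\<integral>z. \<bar>h z\<bar> \<partial>\<rho>) / real (Suc n)" by (simp add: N_def)
    finally show ?thesis .
  qed
  have "(\<lambda>n. (\<integral>z. \<bar>h z\<bar> \<partial>\<rho>) / real (Suc n)) \<longlonglongrightarrow> 0"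
    using LIMSEQ_Suc[OF lim_const_over_n[of "\<integral>z. \<bar>h z\<bar> \<partial>\<rho>"]] by simp
  then have "\<bar>\<integral>z. \<phi> (fst z) * h z \<partial>\<rho>\<bar> \<le> 0"
    by (rule LIMSEQ_le_const) (use approx in auto)
  then show ?thesis unfolding h_def by simp
qed


definition Q :: "'h \<Rightarrow> 'h \<Rightarrow> real" where
  "Q a b = (\<integral>z. evl a (fst z) * evl b (fst z) \<partial>\<rho>)"

lemma reg_evl: "(\<integral>z. (evl fr (fst z) - snd z) * evl v (fst z) \<partial>\<rho>) = 0"
proof -
  have "(\<integral>z. evl v (fst z) * (snd z - evl fr (fst z)) \<partial>\<rho>) = 0"
    by (rule reg_bounded[OF evl_meas abs_evl])
  moreover have "(\<lambda>z. (evl fr (fst z) - snd z) * evl v (fst z)) = (\<lambda>z. - (evl v (fst z) * (snd z - evl fr (fst z))))"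
    by (auto simp: algebra_simps)
  ultimately show ?thesis by simp
qed

lemma foc2: assumes "l > 0" shows "Q (flam l - fr) v + l * inner (flam l) v = 0"
proof -
  have "Q (flam l - fr) v = (\<integral>z. (evl (flam l) (fst z) - snd z) * evl v (fst z) - (evl fr (fst z) - snd z) * evl v (fst z) \<partial>\<rho>)"
    unfolding Q_def by (rule Bochner_Integration.integral_cong) (auto simp: evl_diff algebra_simps)
  also have "\<dots> = (\<integral>z. (evl (flam l) (fst z) - snd z) * evl v (fst z) \<partial>\<rho>)"
    using Bochner_Integration.integral_diff[OF int_evly int_evly] reg_evl by simp
  finally show ?thesis using foc[OF assms, of v] by simp
qed

lemma Q_nonneg: "Q v v \<ge> 0"
  unfolding Q_def by (rule integral_nonneg_AE) auto

lemma Q_le: "Q v v \<le> kap\<^sup>2 * (norm v)\<^sup>2"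
proof -
  have "Q v v \<le> (\<integral>z. kap\<^sup>2 * (norm v)\<^sup>2 \<partial>\<rho>)"
    unfolding Q_def
  proof (rule Bochner_Integration.integral_mono[OF int_evl2])
    fix z :: "'a \<times> real"
    have "\<bar>evl v (fst z)\<bar>\<^sup>2 \<le> (norm v * kap)\<^sup>2" by (rule power_mono[OF abs_evl]) simp
    then show "evl v (fst z) * evl v (fst z) \<le> kap\<^sup>2 * (norm v)\<^sup>2"
      by (simp add: power2_eq_square algebra_simps)
  qed simp
  also have "\<dots> = kap\<^sup>2 * (norm v)\<^sup>2" using rho.prob_space by simp
  finally show ?thesis .
qed

lemma Q_diff1: "Q a c - Q b c = Q (a - b) c"
  unfolding Q_def using Bochner_Integration.integral_diff[OF int_evl2[of a c] int_evl2[of b c]]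
  by (simp add: evl_diff left_diff_distrib)

lemma Q_sum2: "Q (a + b) (a + b) \<le> 2 * Q a a + 2 * Q b b"
proof -
  have "Q (a + b) (a + b) \<le> (\<integral>z. 2 * (evl a (fst z) * evl a (fst z)) + 2 * (evl b (fst z) * evl b (fst z)) \<partial>\<rho>)"
    unfolding Q_def
  proof (rule Bochner_Integration.integral_mono[OF int_evl2])
    show "integrable \<rho> (\<lambda>z. 2 * (evl a (fst z) * evl a (fst z)) + 2 * (evl b (fst z) * evl b (fst z)))"
      using int_evl2[of a a] int_evl2[of b b] by simp
    fix z :: "'a \<times> real"
    have "0 \<le> (evl a (fst z) - evl b (fst z))\<^sup>2" by simp
    then show "evl (a + b) (fst z) * evl (a + b) (fst z) \<le> 2 * (evl a (fst z) * evl a (fst z)) + 2 * (evl b (fst z) * evl b (fst z))"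
      by (simp add: evl_add power2_eq_square algebra_simps)
  qed
  also have "\<dots> = 2 * Q a a + 2 * Q b b"
    unfolding Q_def using int_evl2[of a a] int_evl2[of b b] by simp
  finally show ?thesis .
qed

lemma flam_bound:
  assumes l: "l > 0"
  shows "norm (flam l) \<le> norm fr" "Q (flam l - fr) (flam l - fr) \<le> l * (norm fr)\<^sup>2"
proof -
  let ?p = "flam l"
  have e: "Q (?p - fr) (?p - fr) + l * inner ?p (?p - fr) = 0" by (rule foc2[OF l])
  have i1: "inner ?p (?p - fr) = (norm ?p)\<^sup>2 - inner ?p fr"
    by (simp add: inner_diff_right power2_norm_eq_inner)
  have "l * ((norm ?p)\<^sup>2 - inner ?p fr) \<le> 0" using e Q_nonneg[of "?p - fr"] unfolding i1 by linarith
  then have le: "(norm ?p)\<^sup>2 \<le> inner ?p fr" using l by (simp add: mult_le_0_iff)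
  also have "\<dots> \<le> norm ?p * norm fr" by (rule Cauchy_Schwarz_ineq2[THEN order_trans[OF abs_ge_self]])
  finally have "norm ?p * norm ?p \<le> norm ?p * norm fr" by (simp add: power2_eq_square)
  then show nb: "norm ?p \<le> norm fr"
    by (cases "norm ?p = 0") (auto simp: mult_le_cancel_left)
  have "Q (?p - fr) (?p - fr) = l * (inner ?p fr - (norm ?p)\<^sup>2)" using e i1 by (simp add: algebra_simps)
  also have "\<dots> \<le> l * (norm fr)\<^sup>2"
  proof (rule mult_left_mono)
    have "inner ?p fr \<le> norm ?p * norm fr" by (rule Cauchy_Schwarz_ineq2[THEN order_trans[OF abs_ge_self]])
    also have "\<dots> \<le> norm fr * norm fr" using nb by (intro mult_right_mono) auto
    finally have a: "inner ?p fr \<le> norm fr * norm fr" .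
    have sq: "0 \<le> norm ?p * norm ?p" by simp
    show "inner ?p fr - (norm ?p)\<^sup>2 \<le> (norm fr)\<^sup>2" using a sq unfolding power2_eq_square by linarith
  qed (use l in simp)
  finally show "Q (flam l - fr) (flam l - fr) \<le> l * (norm fr)\<^sup>2" .
qed

lemma flam_mono:
  assumes l: "0 < l" "l < l'"
  shows "(norm (flam l - flam l'))\<^sup>2 \<le> (norm (flam l))\<^sup>2 - (norm (flam l'))\<^sup>2"
proof -
  define a where "a = flam l"
  define b where "b = flam l'"
  define d where "d = a - b"
  have e1: "Q (a - fr) d + l * inner a d = 0" unfolding a_def by (rule foc2) (use l in auto)
  have e2: "Q (b - fr) d + l' * inner b d = 0" unfolding b_def by (rule foc2) (use l in auto)
  have "Q (a - fr) d - Q (b - fr) d = Q d d" unfolding Q_diff1 d_def by (simp add: algebra_simps)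
  then have "Q d d + l * inner a d - l' * inner b d = 0" using e1 e2 by linarith
  moreover have "inner a d = inner b d + inner d d" unfolding d_def by (simp add: inner_diff_left inner_diff_right)
  ultimately have "Q d d + l * inner d d = (l' - l) * inner b d" by (simp add: algebra_simps)
  moreover have "Q d d + l * inner d d \<ge> 0" using Q_nonneg[of d] l by simp
  ultimately have "inner b d \<ge> 0" using l by (simp add: zero_le_mult_iff)
  moreover have "(norm d)\<^sup>2 = (norm a)\<^sup>2 - (norm b)\<^sup>2 - 2 * inner b d"
    unfolding d_def power2_norm_eq_inner by (simp add: inner_diff_left inner_diff_right inner_commute)
  ultimately show ?thesis unfolding a_def b_def d_def by simp
qed


lemma flam_norm_antimono:
  assumes "0 < l" "l \<le> l'" shows "(norm (flam l'))\<^sup>2 \<le> (norm (flam l))\<^sup>2"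
proof (cases "l = l'")
  case False
  then have "(norm (flam l - flam l'))\<^sup>2 \<le> (norm (flam l))\<^sup>2 - (norm (flam l'))\<^sup>2"
    using assms by (intro flam_mono) auto
  moreover have "0 \<le> (norm (flam l - flam l'))\<^sup>2" by simp
  ultimately show ?thesis by linarith
qed simp

lemma flam_conv:
  assumes pos: "\<And>n. ls n > 0" and lim: "ls \<longlonglongrightarrow> 0"
  shows "(\<lambda>n. flam (ls n)) \<longlonglongrightarrow> fr"
proof -
  define Nf where "Nf l = (norm (flam l))\<^sup>2" for l
  define S where "S = Sup (Nf ` {0<..})"
  have bdd: "bdd_above (Nf ` {0<..})"
    unfolding bdd_above_def Nf_def using flam_bound(1)
    by (intro exI[of _ "(norm fr)\<^sup>2"]) (auto intro!: power_mono)
  have neS: "Nf ` {0<..} \<noteq> {}" by auto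
  have leS: "Nf l \<le> S" if "l > 0" for l unfolding S_def using bdd that by (intro cSup_upper) auto
  have dist_bound: "(norm (flam l - flam l'))\<^sup>2 \<le> \<bar>Nf l - Nf l'\<bar>" if "l > 0" "l' > 0" for l l'
  proof -
    consider "l = l'" | "l < l'" | "l' < l" by linarith
    then show ?thesis
    proof cases
      case 2 then show ?thesis using flam_mono[of l l'] that unfolding Nf_def by linarith
    next
      case 3 then show ?thesis using flam_mono[of l' l] that unfolding Nf_def
        by (simp add: norm_minus_commute)
    qed simp
  qed
  have "Cauchy (\<lambda>n. flam (ls n))"
  proof (rule CauchyI)
    fix e :: real assume e: "e > 0"
    have "S - e\<^sup>2 < S" using e by simp
    then obtain y where y: "y \<in> Nf ` {0<..}" "S - e\<^sup>2 < y"
      using less_cSup_iff[OF neS bdd] unfolding S_def by blast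
    then obtain \<delta> where d: "\<delta> > 0" "S - e\<^sup>2 < Nf \<delta>" by auto
    have "\<forall>\<^sub>F n in sequentially. ls n < \<delta>" using order_tendstoD(2)[OF lim d(1)] .
    then obtain M where M: "\<And>n. n \<ge> M \<Longrightarrow> ls n < \<delta>" unfolding eventually_sequentially by blast
    have "norm (flam (ls m) - flam (ls n)) < e" if "m \<ge> M" "n \<ge> M" for m n
    proof -
      have a1: "Nf \<delta> \<le> Nf (ls m)" unfolding Nf_def
        by (rule flam_norm_antimono) (use pos M that in \<open>auto intro: less_imp_le\<close>)
      have a2: "Nf \<delta> \<le> Nf (ls n)" unfolding Nf_def
        by (rule flam_norm_antimono) (use pos M that in \<open>auto intro: less_imp_le\<close>)
      note a = a1 a2
      have b: "Nf (ls m) \<le> S" "Nf (ls n) \<le> S" using leS pos by auto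
      have "(norm (flam (ls m) - flam (ls n)))\<^sup>2 \<le> \<bar>Nf (ls m) - Nf (ls n)\<bar>"
        using dist_bound pos by auto
      also have "\<dots> < e\<^sup>2" using a b d by linarith
      finally show ?thesis using e by (simp add: power_less_imp_less_base)
    qed
    then show "\<exists>M. \<forall>m\<ge>M. \<forall>n\<ge>M. norm (flam (ls m) - flam (ls n)) < e" by blast
  qed
  then obtain g where g: "(\<lambda>n. flam (ls n)) \<longlonglongrightarrow> g"
    using Cauchy_convergent convergent_def by blast
  define h where "h = g - fr"
  have Qb: "Q h h \<le> 2 * (kap\<^sup>2 * (norm (g - flam (ls n)))\<^sup>2) + 2 * (ls n * (norm fr)\<^sup>2)" for n
  proof -
    have "h = (g - flam (ls n)) + (flam (ls n) - fr)" unfolding h_def by simp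
    then have "Q h h \<le> 2 * Q (g - flam (ls n)) (g - flam (ls n)) + 2 * Q (flam (ls n) - fr) (flam (ls n) - fr)"
      using Q_sum2 by metis
    also have "\<dots> \<le> 2 * (kap\<^sup>2 * (norm (g - flam (ls n)))\<^sup>2) + 2 * (ls n * (norm fr)\<^sup>2)"
      using Q_le flam_bound(2)[OF pos] by (intro add_mono mult_left_mono) auto
    finally show ?thesis .
  qed
  have "(\<lambda>n. 2 * (kap\<^sup>2 * (norm (g - flam (ls n)))\<^sup>2) + 2 * (ls n * (norm fr)\<^sup>2)) \<longlonglongrightarrow>
        2 * (kap\<^sup>2 * (norm (g - g))\<^sup>2) + 2 * (0 * (norm fr)\<^sup>2)"
    by (intro tendsto_intros g lim)
  then have "Q h h \<le> 0" using Qb by (intro LIMSEQ_le_const[where a="Q h h"]) auto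
  then have Q0: "Q h h = 0" using Q_nonneg[of h] by linarith
  have "AE z in \<rho>. evl h (fst z) * evl h (fst z) = 0"
    using Q0 unfolding Q_def by (subst (asm) integral_nonneg_eq_0_iff_AE) (auto intro: int_evl2)
  then have "AE z in \<rho>. evl h (fst z) = 0" by simp
  then have "AE x in marginal \<rho>. evl h x = 0"
    unfolding marginal_def
  proof (subst AE_distr_iff)
    note evl_meas[measurable]
    show "{x \<in> space borel. evl h x = 0} \<in> sets borel" by measurable
  qed (use fst_meas in auto)
  then have "h = 0" by (rule embed)
  then show ?thesis using g unfolding h_def by simp
qed


definition C0 :: real where "C0 = ((kap * norm fr + M) * kap + norm fr)\<^sup>2"

lemma xi_bound:
  assumes l: "0 < l" "l \<le> 1" and y: "\<bar>y\<bar> \<le> M"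
  shows "(norm ((evl (flam l) x - y) *\<^sub>R kxc x + l *\<^sub>R flam l))\<^sup>2 \<le> C0"
proof -
  have nb: "norm (flam l) \<le> norm fr" by (rule flam_bound(1)[OF l(1)])
  have "\<bar>evl (flam l) x - y\<bar> \<le> kap * norm fr + M"
    using abs_evl[of "flam l" x] nb y kap_nonneg mult_left_mono[OF nb kap_nonneg] by (simp add: mult.commute)
  then have a: "\<bar>evl (flam l) x - y\<bar> * norm (kxc x) \<le> (kap * norm fr + M) * kap"
    using norm_kxc by (intro mult_mono) (auto simp: kap_nonneg M_nonneg)
  have b: "\<bar>l\<bar> * norm (flam l) \<le> norm fr"
    using mult_mono[of "\<bar>l\<bar>" 1 "norm (flam l)" "norm fr"] l nb by simp
  have "norm ((evl (flam l) x - y) *\<^sub>R kxc x + l *\<^sub>R flam l) \<le> (kap * norm fr + M) * kap + norm fr"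
    using norm_triangle_ineq[of "(evl (flam l) x - y) *\<^sub>R kxc x" "l *\<^sub>R flam l"] a b by simp
  then show ?thesis unfolding C0_def by (rule power_mono) simp
qed

lemma step_int:
  assumes l: "0 < l" "l \<le> 1" and g: "g > 0" and gk: "g * kap\<^sup>2 \<le> 1 - g * l"
  shows "(\<integral>z. (norm ((1 - g * l) *\<^sub>R w - g *\<^sub>R (evl w (fst z) *\<^sub>R kxc (fst z)
            + ((evl (flam l) (fst z) - snd z) *\<^sub>R kxc (fst z) + l *\<^sub>R flam l))))\<^sup>2 \<partial>\<rho>)
         \<le> (1 - g * l)\<^sup>2 * (norm w)\<^sup>2 + 2 * g\<^sup>2 * C0"
    (is "integral\<^sup>L \<rho> ?L \<le> ?R")
proof -
  let ?q = "1 - g * l"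
  define R where "R z = ?q\<^sup>2 * (norm w)\<^sup>2 - 2 * ?q * g * ((evl (flam l) (fst z) - snd z) * evl w (fst z) + l * inner (flam l) w) + 2 * g\<^sup>2 * C0" for z
  have Ri: "integrable \<rho> R" unfolding R_def using int_evly[of "flam l" w] by simp
  have RI: "integral\<^sup>L \<rho> R = ?R"
  proof -
    have "integral\<^sup>L \<rho> R = ?q\<^sup>2 * (norm w)\<^sup>2 - 2 * ?q * g * ((\<integral>z. (evl (flam l) (fst z) - snd z) * evl w (fst z) \<partial>\<rho>) + l * inner (flam l) w) + 2 * g\<^sup>2 * C0"
      unfolding R_def using int_evly[of "flam l" w] rho.prob_space by simp
    then show ?thesis using foc[OF l(1), of w] by simp
  qed
  have pt: "?L z \<le> R z" if "\<bar>snd z\<bar> \<le> M" for z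
  proof -
    have k: "(norm (kxc (fst z)))\<^sup>2 \<le> kap\<^sup>2" by (rule power_mono[OF norm_kxc]) simp
    have "?L z \<le> ?q\<^sup>2 * (norm w)\<^sup>2 - 2 * ?q * g * inner w ((evl (flam l) (fst z) - snd z) *\<^sub>R kxc (fst z) + l *\<^sub>R flam l) + 2 * g\<^sup>2 * C0"
      using step_alg[OF g gk k xi_bound[OF l that]] by (simp add: evl_inner)
    also have "\<dots> = R z" unfolding R_def
      by (simp add: inner_add_right evl_inner inner_commute)
    finally show ?thesis .
  qed
  show ?thesis
  proof (cases "integrable \<rho> ?L")
    case True
    have "integral\<^sup>L \<rho> ?L \<le> integral\<^sup>L \<rho> R"
      by (rule integral_mono_AE[OF True Ri]) (use supp pt in \<open>auto elim: eventually_mono\<close>)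
    then show ?thesis using RI by simp
  next
    case False
    then have "integral\<^sup>L \<rho> ?L = 0" by (rule not_integrable_integral_eq)
    moreover have "0 \<le> ?R" by (intro add_nonneg_nonneg mult_nonneg_nonneg) (auto simp: C0_def)
    ultimately show ?thesis by simp
  qed
qed

end



lemma online_agree:
  assumes "\<And>s. s \<in> {1..t} \<Longrightarrow> z s = z' s"
  shows "online f0 g l k e z t = online f0 g l k e z' t"
  using assms by (induction t) (auto simp: Let_def)

locale rk3 = rk2 X K evl kx \<rho> M fr flam
  for X :: "'a::euclidean_space set"
    and K :: "'a \<Rightarrow> 'a \<Rightarrow> real"
    and evl :: "'h::{real_inner,complete_space} \<Rightarrow> 'a \<Rightarrow> real"
    and kx :: "'a \<Rightarrow> 'h"
    and \<rho> :: "('a \<times> real) measure" and M :: real and fr :: 'h and flam :: "real \<Rightarrow> 'h" +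
  fixes P :: "'w measure" and zs :: "nat \<Rightarrow> 'w \<Rightarrow> 'a \<times> real"
    and \<gamma> lam :: "nat \<Rightarrow> real" and f0 :: 'h
  assumes P_prob: "prob_space P"
    and iid: "prob_space.indep_vars P (\<lambda>_. borel) zs {1..}"
    and law: "\<And>t. t \<ge> 1 \<Longrightarrow> distr P borel (zs t) = \<rho>"
begin

interpretation rho: prob_space \<rho> by (rule rho_prob)
interpretation P: prob_space P by (rule P_prob)

definition Fp :: "nat \<Rightarrow> 'w \<Rightarrow> 'h" where
  "Fp t \<omega> = online f0 \<gamma> lam kxc evl (\<lambda>s. zs s \<omega>) t"

definition good :: "'a \<times> real \<Rightarrow> bool" where
  "good z \<longleftrightarrow> fst z \<in> X \<and> \<bar>snd z\<bar> \<le> M"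

lemma zs_meas: "s \<ge> 1 \<Longrightarrow> zs s \<in> P \<rightarrow>\<^sub>M borel"
  using iid unfolding P.indep_vars_def by auto

lemma good_set: "{z \<in> space borel. good z} \<in> sets borel"
proof -
  have "{z. good z} = X \<times> {y. \<bar>y\<bar> \<le> M}" by (auto simp: good_def)
  moreover have "{y::real. \<bar>y\<bar> \<le> M} = {-M..M}" by auto
  then have "X \<times> {y::real. \<bar>y\<bar> \<le> M} \<in> sets borel"
    by (auto intro!: borel_closed closed_Times X_closed)
  ultimately show ?thesis by simp
qed

lemma AE_good: "AE \<omega> in P. \<forall>s\<ge>1. good (zs s \<omega>)"
proof -
  have "AE \<omega> in P. good (zs s \<omega>)" if "s \<ge> 1" for s
  proof -
    have "AE z in \<rho>. good z" unfolding good_def by (rule supp)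
    then have "AE z in distr P borel (zs s). good z" unfolding law[OF that] .
    then show ?thesis by (subst (asm) AE_distr_iff[OF zs_meas[OF that] good_set])
  qed
  then have "AE \<omega> in P. \<forall>s. s \<ge> 1 \<longrightarrow> good (zs s \<omega>)" by (subst AE_all_countable) auto
  then show ?thesis by simp
qed

fun Bd :: "nat \<Rightarrow> real" where
  "Bd 0 = norm f0"
| "Bd (Suc t) = Bd t + \<bar>\<gamma> (Suc t)\<bar> * ((kap * Bd t + M) * kap + \<bar>lam (Suc t)\<bar> * Bd t)"

lemma Bd_nonneg: "Bd t \<ge> 0"
  by (induction t) (auto simp: kap_nonneg M_nonneg intro!: add_nonneg_nonneg mult_nonneg_nonneg)

lemma online_bound:
  assumes "\<And>s. s \<in> {1..t} \<Longrightarrow> \<bar>snd (z s)\<bar> \<le> M"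
  shows "norm (online f0 \<gamma> lam kxc evl z t) \<le> Bd t"
  using assms
proof (induction t)
  case 0 then show ?case by simp
next
  case (Suc t)
  let ?f = "online f0 \<gamma> lam kxc evl z t"
  let ?x = "fst (z (Suc t))" and ?y = "snd (z (Suc t))"
  have f: "norm ?f \<le> Bd t" using Suc by auto
  have y: "\<bar>?y\<bar> \<le> M" using Suc.prems by auto
  have e: "\<bar>evl ?f ?x - ?y\<bar> \<le> kap * Bd t + M"
    using abs_evl[of ?f ?x] mult_right_mono[OF f kap_nonneg] y by (simp add: mult.commute) 
  have "norm ((evl ?f ?x - ?y) *\<^sub>R kxc ?x + lam (Suc t) *\<^sub>R ?f) \<le> \<bar>evl ?f ?x - ?y\<bar> * norm (kxc ?x) + \<bar>lam (Suc t)\<bar> * norm ?f"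
    by (rule order_trans[OF norm_triangle_ineq]) simp
  also have "\<dots> \<le> (kap * Bd t + M) * kap + \<bar>lam (Suc t)\<bar> * Bd t"
    using e f norm_kxc by (intro add_mono mult_mono mult_left_mono) (auto simp: kap_nonneg M_nonneg Bd_nonneg)
  finally have a: "norm ((evl ?f ?x - ?y) *\<^sub>R kxc ?x + lam (Suc t) *\<^sub>R ?f) \<le> (kap * Bd t + M) * kap + \<bar>lam (Suc t)\<bar> * Bd t" .
  have eq: "online f0 \<gamma> lam kxc evl z (Suc t) = ?f - \<gamma> (Suc t) *\<^sub>R ((evl ?f ?x - ?y) *\<^sub>R kxc ?x + lam (Suc t) *\<^sub>R ?f)"
    by (simp add: Let_def)
  have "norm (online f0 \<gamma> lam kxc evl z (Suc t)) \<le> norm ?f + norm (\<gamma> (Suc t) *\<^sub>R ((evl ?f ?x - ?y) *\<^sub>R kxc ?x + lam (Suc t) *\<^sub>R ?f))"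
    unfolding eq by (rule norm_triangle_ineq4)
  also have "\<dots> = norm ?f + \<bar>\<gamma> (Suc t)\<bar> * norm ((evl ?f ?x - ?y) *\<^sub>R kxc ?x + lam (Suc t) *\<^sub>R ?f)"
    by simp
  also have "\<dots> \<le> Bd t + \<bar>\<gamma> (Suc t)\<bar> * ((kap * Bd t + M) * kap + \<bar>lam (Suc t)\<bar> * Bd t)"
    by (rule add_mono[OF f mult_left_mono[OF a abs_ge_zero]])
  finally show ?case by simp
qed

lemma online_kx:
  assumes "\<And>s. s \<in> {1..t} \<Longrightarrow> fst (z s) \<in> X"
  shows "online f0 \<gamma> lam kx evl z t = online f0 \<gamma> lam kxc evl z t"
  using assms by (induction t) (auto simp: Let_def kxc_def)

lemma Fp_rep: "hrep P (Fp t)"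
  unfolding Fp_def by (rule rep_online) (rule zs_meas)

lemma Fp_norm2_meas: "(\<lambda>\<omega>. (norm (Fp t \<omega> - c))\<^sup>2) \<in> borel_measurable P"
  by (rule rep_norm2, rule rep_diff[OF Fp_rep rep_const])

lemma Fp_norm_meas: "(\<lambda>\<omega>. norm (Fp t \<omega> - c)) \<in> borel_measurable P"
proof -
  have "(\<lambda>\<omega>. sqrt ((norm (Fp t \<omega> - c))\<^sup>2)) \<in> borel_measurable P"
    by (rule measurable_compose[OF Fp_norm2_meas borel_measurable_sqrt])
  then show ?thesis by simp
qed

lemma Fp_bound_AE: "AE \<omega> in P. norm (Fp t \<omega>) \<le> Bd t"
  using AE_good by eventually_elim (auto simp: Fp_def good_def intro!: online_bound)

lemma Fp_int2: "integrable P (\<lambda>\<omega>. (norm (Fp t \<omega> - c))\<^sup>2)"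
proof (rule P.integrable_const_bound[where B="(Bd t + norm c)\<^sup>2"])
  show "AE \<omega> in P. norm ((norm (Fp t \<omega> - c))\<^sup>2) \<le> (Bd t + norm c)\<^sup>2"
    using Fp_bound_AE[of t]
  proof eventually_elim
    case (elim \<omega>)
    have "norm (Fp t \<omega> - c) \<le> Bd t + norm c" using elim norm_triangle_ineq4[of "Fp t \<omega>" c] by linarith
    then show ?case by (simp add: power_mono)
  qed
qed (rule Fp_norm2_meas)

lemma Fp_int1: "integrable P (\<lambda>\<omega>. norm (Fp t \<omega> - c))"
proof (rule P.integrable_const_bound[where B="Bd t + norm c"])
  show "AE \<omega> in P. norm (norm (Fp t \<omega> - c)) \<le> Bd t + norm c"
    using Fp_bound_AE[of t]
  proof eventually_elim
    case (elim \<omega>)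
    show ?case using elim norm_triangle_ineq4[of "Fp t \<omega>" c] by simp
  qed
qed (rule Fp_norm_meas)


lemma online_step:
  "online f0 \<gamma> lam kxc evl z (Suc t) - \<phi> =
    (1 - \<gamma> (Suc t) * lam (Suc t)) *\<^sub>R (online f0 \<gamma> lam kxc evl z t - \<phi>)
    - \<gamma> (Suc t) *\<^sub>R (evl (online f0 \<gamma> lam kxc evl z t - \<phi>) (fst (z (Suc t))) *\<^sub>R kxc (fst (z (Suc t)))
       + ((evl \<phi> (fst (z (Suc t))) - snd (z (Suc t))) *\<^sub>R kxc (fst (z (Suc t))) + lam (Suc t) *\<^sub>R \<phi>))"
  by (simp add: Let_def evl_diff algebra_simps)

lemma E_shift:
  "(\<integral>\<omega>. (norm (Fp t \<omega> - c'))\<^sup>2 \<partial>P) \<le> (sqrt (\<integral>\<omega>. (norm (Fp t \<omega> - c))\<^sup>2 \<partial>P) + norm (c - c'))\<^sup>2"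
proof -
  define d where "d = norm (c - c')"
  define EXm where "EXm = (\<integral>\<omega>. norm (Fp t \<omega> - c) \<partial>P)"
  define EYm where "EYm = (\<integral>\<omega>. (norm (Fp t \<omega> - c))\<^sup>2 \<partial>P)"
  have EYmnn: "EYm \<ge> 0" unfolding EYm_def by (rule integral_nonneg_AE) auto
  have "0 \<le> (\<integral>\<omega>. (norm (Fp t \<omega> - c) - EXm)\<^sup>2 \<partial>P)" by (rule integral_nonneg_AE) auto
  also have "\<dots> = EYm - EXm\<^sup>2"
    unfolding EXm_def EYm_def by (rule P.variance_eq[OF Fp_int1 Fp_int2])
  finally have "EXm\<^sup>2 \<le> EYm" by simp
  then have "sqrt (EXm\<^sup>2) \<le> sqrt EYm" by (rule real_sqrt_le_mono)
  then have EXmle: "EXm \<le> sqrt EYm" by simp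
  have pt: "(norm (Fp t \<omega> - c'))\<^sup>2 \<le> (norm (Fp t \<omega> - c))\<^sup>2 + 2 * d * norm (Fp t \<omega> - c) + d\<^sup>2" for \<omega>
  proof -
    have "norm (Fp t \<omega> - c') \<le> norm (Fp t \<omega> - c) + d"
      unfolding d_def using norm_triangle_ineq[of "Fp t \<omega> - c" "c - c'"] by simp
    then have "(norm (Fp t \<omega> - c'))\<^sup>2 \<le> (norm (Fp t \<omega> - c) + d)\<^sup>2" by (rule power_mono) simp
    then show ?thesis by (simp add: power2_eq_square algebra_simps)
  qed
  have "(\<integral>\<omega>. (norm (Fp t \<omega> - c'))\<^sup>2 \<partial>P) \<le> (\<integral>\<omega>. (norm (Fp t \<omega> - c))\<^sup>2 + 2 * d * norm (Fp t \<omega> - c) + d\<^sup>2 \<partial>P)"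
    by (rule Bochner_Integration.integral_mono[OF Fp_int2 _ pt]) (use Fp_int2 Fp_int1 in simp)
  also have "\<dots> = EYm + 2 * d * EXm + d\<^sup>2"
    unfolding EXm_def EYm_def using Fp_int2 Fp_int1 P.prob_space by simp
  also have "\<dots> \<le> EYm + 2 * d * sqrt EYm + d\<^sup>2"
    using EXmle by (simp add: d_def mult_left_mono)
  also have "\<dots> = (sqrt EYm + d)\<^sup>2" using EYmnn by (simp add: power2_eq_square algebra_simps)
  finally show ?thesis unfolding EYm_def d_def .
qed


definition SS :: "nat \<Rightarrow> (nat \<Rightarrow> 'a \<times> real) measure" where
  "SS t = PiM {1..t} (\<lambda>_. borel)"

definition UU :: "nat \<Rightarrow> 'w \<Rightarrow> nat \<Rightarrow> 'a \<times> real" where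
  "UU t \<omega> = restrict (\<lambda>s. zs s \<omega>) {1..t}"

definition Gt :: "nat \<Rightarrow> (nat \<Rightarrow> 'a \<times> real) \<Rightarrow> 'h" where
  "Gt t u = online f0 \<gamma> lam kxc evl (\<lambda>s. if s \<in> {1..t} then u s else undefined) t"

definition JJ :: "nat \<Rightarrow> (nat \<Rightarrow> 'a \<times> real) \<times> ('a \<times> real) \<Rightarrow> nat \<Rightarrow> 'a \<times> real" where
  "JJ t p s = (if s \<in> {1..t} then fst p s else snd p)"

lemma UU_meas: "UU t \<in> P \<rightarrow>\<^sub>M SS t"
  unfolding UU_def SS_def by (rule measurable_restrict) (auto intro: zs_meas)

lemma Gt_UU: "Gt t (UU t \<omega>) = Fp t \<omega>"
  unfolding Gt_def Fp_def UU_def by (rule online_agree) auto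

lemma Gt_rep: "hrep (SS t) (Gt t)"
proof -
  have "hrep (SS t) (\<lambda>u. online f0 \<gamma> lam kxc evl (\<lambda>s. (\<lambda>s u. if s \<in> {1..t} then u s else undefined) s u) t)"
  proof (rule rep_online)
    fix s :: nat
    show "(\<lambda>u. if s \<in> {1..t} then u s else undefined) \<in> SS t \<rightarrow>\<^sub>M borel"
      by (cases "s \<in> {1..t}") (auto simp: SS_def intro: measurable_component_singleton)
  qed
  then show ?thesis unfolding Gt_def by simp
qed

lemma JJ_rep: "hrep (SS t \<Otimes>\<^sub>M borel) (\<lambda>p. online f0 \<gamma> lam kxc evl (JJ t p) (Suc t))"
proof (rule rep_online)
  fix s :: nat
  show "(\<lambda>p. JJ t p s) \<in> SS t \<Otimes>\<^sub>M borel \<rightarrow>\<^sub>M borel"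
  proof (cases "s \<in> {1..t}")
    case True
    have "(\<lambda>p. fst p s) \<in> SS t \<Otimes>\<^sub>M borel \<rightarrow>\<^sub>M borel"
      by (rule measurable_compose[OF measurable_fst]) (use True in \<open>auto simp: SS_def intro: measurable_component_singleton\<close>)
    then show ?thesis using True by (simp add: JJ_def)
  next
    case False
    then have "(\<lambda>p. JJ t p s) = snd" by (auto simp: JJ_def fun_eq_iff)
    then show ?thesis by simp
  qed
qed

definition WW :: "nat \<Rightarrow> (nat \<Rightarrow> 'a \<times> real) measure" where
  "WW t = PiM {Suc t} (\<lambda>_. borel)"

definition VV :: "nat \<Rightarrow> 'w \<Rightarrow> nat \<Rightarrow> 'a \<times> real" where
  "VV t \<omega> = restrict (\<lambda>s. zs s \<omega>) {Suc t}"

lemma VV_meas: "VV t \<in> P \<rightarrow>\<^sub>M WW t"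
  unfolding VV_def WW_def by (rule measurable_restrict) (auto intro: zs_meas)

lemma indep_UV: "P.indep_var (SS t) (UU t) (WW t) (VV t)"
  unfolding SS_def UU_def[abs_def] WW_def VV_def[abs_def]
  by (rule P.indep_var_restrict[OF iid]) auto

lemma ev_meas: "(\<lambda>v. v (Suc t)) \<in> WW t \<rightarrow>\<^sub>M borel"
  unfolding WW_def by (rule measurable_component_singleton) auto


lemma JJ_rep_u: "hrep borel (\<lambda>z. online f0 \<gamma> lam kxc evl (JJ t (u, z)) (Suc t))"
proof (rule rep_online)
  fix s :: nat
  show "(\<lambda>z. JJ t (u, z) s) \<in> borel \<rightarrow>\<^sub>M borel"
    by (cases "s \<in> {1..t}") (auto simp: JJ_def)
qed

lemma step_E:
  assumes l: "0 < lam (Suc t)" "lam (Suc t) \<le> 1" and g: "\<gamma> (Suc t) > 0"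
    and gk: "\<gamma> (Suc t) * kap\<^sup>2 \<le> 1 - \<gamma> (Suc t) * lam (Suc t)"
  shows "(\<integral>\<omega>. (norm (Fp (Suc t) \<omega> - flam (lam (Suc t))))\<^sup>2 \<partial>P)
     \<le> (1 - \<gamma> (Suc t) * lam (Suc t))\<^sup>2 * (\<integral>\<omega>. (norm (Fp t \<omega> - flam (lam (Suc t))))\<^sup>2 \<partial>P)
        + 2 * (\<gamma> (Suc t))\<^sup>2 * C0"
proof -
  define \<phi> where "\<phi> = flam (lam (Suc t))"
  define q where "q = 1 - \<gamma> (Suc t) * lam (Suc t)"
  define c where "c = 2 * (\<gamma> (Suc t))\<^sup>2 * C0"
  define \<Psi>0 where "\<Psi>0 p = (norm (online f0 \<gamma> lam kxc evl (JJ t p) (Suc t) - \<phi>))\<^sup>2" for p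
  define \<Psi> where "\<Psi> p = \<Psi>0 (fst p, snd p (Suc t))" for p :: "(nat \<Rightarrow> 'a \<times> real) \<times> (nat \<Rightarrow> 'a \<times> real)"
  define Du where "Du = distr P (SS t) (UU t)"
  define Dv where "Dv = distr P (WW t) (VV t)"
  have \<Psi>0m: "\<Psi>0 \<in> borel_measurable (SS t \<Otimes>\<^sub>M borel)"
    unfolding \<Psi>0_def by (rule rep_norm2[OF rep_diff[OF JJ_rep rep_const]])
  have pm: "(\<lambda>p. (fst p, snd p (Suc t))) \<in> SS t \<Otimes>\<^sub>M WW t \<rightarrow>\<^sub>M SS t \<Otimes>\<^sub>M borel"
    by (intro measurable_Pair measurable_fst measurable_compose[OF measurable_snd ev_meas])
  have \<Psi>m: "\<Psi> \<in> borel_measurable (SS t \<Otimes>\<^sub>M WW t)"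
    unfolding \<Psi>_def by (rule measurable_compose[OF pm \<Psi>0m])
  have UVm: "(\<lambda>\<omega>. (UU t \<omega>, VV t \<omega>)) \<in> P \<rightarrow>\<^sub>M SS t \<Otimes>\<^sub>M WW t"
    by (rule measurable_Pair[OF UU_meas VV_meas])
  have dist: "Du \<Otimes>\<^sub>M Dv = distr P (SS t \<Otimes>\<^sub>M WW t) (\<lambda>\<omega>. (UU t \<omega>, VV t \<omega>))"
    using indep_UV unfolding P.indep_var_distribution_eq Du_def Dv_def by blast
  have eqw: "\<Psi> (UU t \<omega>, VV t \<omega>) = (norm (Fp (Suc t) \<omega> - \<phi>))\<^sup>2" for \<omega>
    unfolding \<Psi>_def \<Psi>0_def Fp_def
    by (intro arg_cong[where f="\<lambda>x. (norm (x - \<phi>))\<^sup>2"] online_agree) (auto simp: JJ_def UU_def VV_def le_Suc_eq)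
  have intP: "integrable P (\<lambda>\<omega>. \<Psi> (UU t \<omega>, VV t \<omega>))" unfolding eqw by (rule Fp_int2)
  have intPair: "integrable (Du \<Otimes>\<^sub>M Dv) \<Psi>"
    unfolding dist by (subst integrable_distr_eq[OF UVm \<Psi>m]) (rule intP)
  interpret Du: prob_space Du unfolding Du_def by (rule P.prob_space_distr[OF UU_meas])
  interpret Dv: prob_space Dv unfolding Dv_def by (rule P.prob_space_distr[OF VV_meas])
  interpret DD: pair_prob_space Du Dv ..
  have inner: "(\<integral>v. \<Psi> (u, v) \<partial>Dv) \<le> q\<^sup>2 * (norm (Gt t u - \<phi>))\<^sup>2 + c" for u
  proof -
    have m0: "(\<lambda>z. \<Psi>0 (u, z)) \<in> borel_measurable borel"
      unfolding \<Psi>0_def by (rule rep_norm2[OF rep_diff[OF JJ_rep_u rep_const]])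
    have m1: "(\<lambda>v. \<Psi> (u, v)) \<in> borel_measurable (WW t)"
      unfolding \<Psi>_def by (simp, rule measurable_compose[OF ev_meas m0])
    have "(\<integral>v. \<Psi> (u, v) \<partial>Dv) = (\<integral>\<omega>. \<Psi>0 (u, zs (Suc t) \<omega>) \<partial>P)"
      unfolding Dv_def by (subst integral_distr[OF VV_meas m1]) (simp add: \<Psi>_def VV_def)
    also have "\<dots> = (\<integral>z. \<Psi>0 (u, z) \<partial>distr P borel (zs (Suc t)))"
      by (rule integral_distr[OF zs_meas m0, symmetric]) simp
    also have "\<dots> = (\<integral>z. \<Psi>0 (u, z) \<partial>\<rho>)" using law[of "Suc t"] by simp
    also have "\<dots> = (\<integral>z. (norm (q *\<^sub>R (Gt t u - \<phi>) - \<gamma> (Suc t) *\<^sub>R (evl (Gt t u - \<phi>) (fst z) *\<^sub>R kxc (fst z)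
            + ((evl (flam (lam (Suc t))) (fst z) - snd z) *\<^sub>R kxc (fst z) + lam (Suc t) *\<^sub>R flam (lam (Suc t))))))\<^sup>2 \<partial>\<rho>)"
    proof (rule Bochner_Integration.integral_cong[OF refl])
      fix z
      have a: "online f0 \<gamma> lam kxc evl (JJ t (u, z)) t = Gt t u"
        unfolding Gt_def by (rule online_agree) (auto simp: JJ_def)
      show "\<Psi>0 (u, z) = (norm (q *\<^sub>R (Gt t u - \<phi>) - \<gamma> (Suc t) *\<^sub>R (evl (Gt t u - \<phi>) (fst z) *\<^sub>R kxc (fst z)
            + ((evl (flam (lam (Suc t))) (fst z) - snd z) *\<^sub>R kxc (fst z) + lam (Suc t) *\<^sub>R flam (lam (Suc t))))))\<^sup>2"
        unfolding \<Psi>0_def online_step a q_def \<phi>_def by (simp add: JJ_def)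
    qed
    also have "\<dots> \<le> q\<^sup>2 * (norm (Gt t u - \<phi>))\<^sup>2 + c"
      unfolding q_def c_def by (rule step_int[OF l g gk])
    finally show ?thesis .
  qed
  have Gm: "(\<lambda>u. q\<^sup>2 * (norm (Gt t u - \<phi>))\<^sup>2 + c) \<in> borel_measurable (SS t)"
    using rep_norm2[OF rep_diff[OF Gt_rep rep_const]] by simp
  have intG: "integrable Du (\<lambda>u. q\<^sup>2 * (norm (Gt t u - \<phi>))\<^sup>2 + c)"
    unfolding Du_def by (subst integrable_distr_eq[OF UU_meas Gm]) (use Fp_int2 in \<open>simp add: Gt_UU\<close>)
  have "(\<integral>\<omega>. (norm (Fp (Suc t) \<omega> - \<phi>))\<^sup>2 \<partial>P) = (\<integral>\<omega>. \<Psi> (UU t \<omega>, VV t \<omega>) \<partial>P)"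
    unfolding eqw ..
  also have "\<dots> = integral\<^sup>L (Du \<Otimes>\<^sub>M Dv) \<Psi>"
    unfolding dist by (rule integral_distr[OF UVm \<Psi>m, symmetric])
  also have "\<dots> = (\<integral>u. (\<integral>v. \<Psi> (u, v) \<partial>Dv) \<partial>Du)"
    by (rule DD.integral_fst'[OF intPair, symmetric])
  also have "\<dots> \<le> (\<integral>u. q\<^sup>2 * (norm (Gt t u - \<phi>))\<^sup>2 + c \<partial>Du)"
    by (rule Bochner_Integration.integral_mono[OF DD.integrable_fst'[OF intPair] intG inner])
  also have "\<dots> = (\<integral>\<omega>. q\<^sup>2 * (norm (Fp t \<omega> - \<phi>))\<^sup>2 + c \<partial>P)"
    unfolding Du_def by (subst integral_distr[OF UU_meas Gm]) (simp add: Gt_UU)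
  also have "\<dots> = q\<^sup>2 * (\<integral>\<omega>. (norm (Fp t \<omega> - \<phi>))\<^sup>2 \<partial>P) + c"
    using Fp_int2 P.prob_space by simp
  finally show ?thesis unfolding q_def c_def \<phi>_def .
qed

end



lemma sqrt_le_of_sq: "0 \<le> b \<Longrightarrow> a \<le> b\<^sup>2 \<Longrightarrow> sqrt a \<le> b"
  by (metis real_sqrt_le_mono real_sqrt_abs abs_of_nonneg)

lemma mink_sqrt:
  fixes X Y c :: real
  assumes "0 \<le> X" "0 \<le> Y" "0 \<le> c"
  shows "sqrt ((X + Y)\<^sup>2 + c) \<le> sqrt (X\<^sup>2 + c) + Y"
proof (rule sqrt_le_of_sq)
  have s: "X \<le> sqrt (X\<^sup>2 + c)" using assms by (intro real_le_rsqrt) auto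
  show "0 \<le> sqrt (X\<^sup>2 + c) + Y" using assms by simp
  have "(sqrt (X\<^sup>2 + c) + Y)\<^sup>2 = X\<^sup>2 + c + 2 * Y * sqrt (X\<^sup>2 + c) + Y\<^sup>2"
    using assms by (simp add: power2_eq_square algebra_simps)
  moreover have "2 * Y * X \<le> 2 * Y * sqrt (X\<^sup>2 + c)" using s assms by (intro mult_left_mono) auto
  ultimately show "(X + Y)\<^sup>2 + c \<le> (sqrt (X\<^sup>2 + c) + Y)\<^sup>2" by (simp add: power2_eq_square algebra_simps)
qed

lemma recur_bound:
  fixes a d c q :: "nat \<Rightarrow> real"
  assumes a_nn: "\<And>t. 0 \<le> a t" and d_nn: "\<And>t. 0 \<le> d t" and c_nn: "\<And>t. 0 \<le> c t"
    and q: "\<And>t. t > N \<Longrightarrow> 0 \<le> q t \<and> q t \<le> 1"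
    and rec: "\<And>t. t \<ge> N \<Longrightarrow> (a (Suc t))\<^sup>2 \<le> (q (Suc t))\<^sup>2 * (a t + d (Suc t))\<^sup>2 + c (Suc t)"
    and t: "t \<ge> N"
  shows "a t \<le> sqrt ((\<Prod>i=N+1..t. (q i)\<^sup>2) * (a N)\<^sup>2 + (\<Sum>k=N+1..t. c k * (\<Prod>i=k+1..t. (q i)\<^sup>2)))
                + (\<Sum>k=N+1..t. d k * (\<Prod>i=k+1..t. q i))"
  using t
proof (induction t rule: nat_induct_at_least)
  case base
  then show ?case using a_nn[of N] by simp
next
  case (Suc t)
  define U where "U t = (\<Prod>i=N+1..t. (q i)\<^sup>2) * (a N)\<^sup>2 + (\<Sum>k=N+1..t. c k * (\<Prod>i=k+1..t. (q i)\<^sup>2))" for t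
  define V where "V t = (\<Sum>k=N+1..t. d k * (\<Prod>i=k+1..t. q i))" for t
  have qS: "0 \<le> q (Suc t)" "q (Suc t) \<le> 1" using q[of "Suc t"] Suc.hyps by auto
  have U0: "0 \<le> U t" unfolding U_def using c_nn
    by (intro add_nonneg_nonneg mult_nonneg_nonneg sum_nonneg prod_nonneg) auto
  have V0: "0 \<le> V t" unfolding V_def using d_nn q
    by (intro sum_nonneg mult_nonneg_nonneg prod_nonneg) auto
  have US: "U (Suc t) = (q (Suc t))\<^sup>2 * U t + c (Suc t)"
  proof -
    have "(\<Sum>k=N+1..t. c k * (\<Prod>i=k+1..Suc t. (q i)\<^sup>2)) = (q (Suc t))\<^sup>2 * (\<Sum>k=N+1..t. c k * (\<Prod>i=k+1..t. (q i)\<^sup>2))"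
      by (subst sum_distrib_left, rule sum.cong) auto
    then show ?thesis using Suc.hyps unfolding U_def by (simp add: algebra_simps)
  qed
  have VS: "V (Suc t) = q (Suc t) * V t + d (Suc t)"
  proof -
    have "(\<Sum>k=N+1..t. d k * (\<Prod>i=k+1..Suc t. q i)) = q (Suc t) * (\<Sum>k=N+1..t. d k * (\<Prod>i=k+1..t. q i))"
      by (subst sum_distrib_left, rule sum.cong) auto
    then show ?thesis using Suc.hyps unfolding V_def by (simp add: algebra_simps)
  qed
  have IH: "a t \<le> sqrt (U t) + V t" using Suc.IH unfolding U_def V_def .
  have h1: "(q (Suc t) * (a t + d (Suc t)))\<^sup>2 \<le> (q (Suc t) * (sqrt (U t) + V t + d (Suc t)))\<^sup>2"
    using IH qS a_nn d_nn by (intro power_mono mult_left_mono) auto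
  have h2: "q (Suc t) * (sqrt (U t) + V t + d (Suc t)) = q (Suc t) * sqrt (U t) + q (Suc t) * (V t + d (Suc t))"
    by (simp add: algebra_simps)
  have h3: "(q (Suc t) * (a t + d (Suc t)))\<^sup>2 = (q (Suc t))\<^sup>2 * (a t + d (Suc t))\<^sup>2"
    by (simp add: power_mult_distrib)
  have "(a (Suc t))\<^sup>2 \<le> (q (Suc t) * sqrt (U t) + q (Suc t) * (V t + d (Suc t)))\<^sup>2 + c (Suc t)"
    using rec[OF Suc.hyps] h1 h3 unfolding h2 by linarith
  then have "a (Suc t) \<le> sqrt ((q (Suc t) * sqrt (U t) + q (Suc t) * (V t + d (Suc t)))\<^sup>2 + c (Suc t))"
    using a_nn by (metis real_sqrt_le_mono real_sqrt_abs abs_of_nonneg)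
  also have "\<dots> \<le> sqrt ((q (Suc t) * sqrt (U t))\<^sup>2 + c (Suc t)) + q (Suc t) * (V t + d (Suc t))"
    using qS U0 V0 d_nn c_nn by (intro mink_sqrt) auto
  also have "\<dots> \<le> sqrt (U (Suc t)) + V (Suc t)"
    unfolding US VS using qS U0 d_nn[of "Suc t"] mult_right_le_one_le[of "d (Suc t)" "q (Suc t)"]
    by (simp add: power_mult_distrib algebra_simps)
  finally show ?case unfolding U_def V_def .
qed


lemma sum_split_mid:
  fixes f :: "nat \<Rightarrow> 'b::comm_monoid_add"
  assumes "a \<le> b" "b \<le> c"
  shows "(\<Sum>k=a+1..c. f k) = (\<Sum>k=a+1..b. f k) + (\<Sum>k=b+1..c. f k)"
  using assms(2)
proof (induction c rule: nat_induct_at_least)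
  case base then show ?case by simp
next
  case (Suc c) then show ?case using assms(1) by (simp add: add.assoc)
qed

lemma prod_split_mid:
  fixes f :: "nat \<Rightarrow> 'b::comm_monoid_mult"
  assumes "a \<le> b" "b \<le> c"
  shows "(\<Prod>k=a+1..c. f k) = (\<Prod>k=a+1..b. f k) * (\<Prod>k=b+1..c. f k)"
  using assms(2)
proof (induction c rule: nat_induct_at_least)
  case base then show ?case by simp
next
  case (Suc c) then show ?case using assms(1) by (simp add: mult.assoc)
qed

lemma limsup_ev_less:
  fixes x :: "nat \<Rightarrow> real"
  assumes "limsup (\<lambda>n. ereal (x n)) = 0" "e > 0"
  shows "\<forall>\<^sub>F n in sequentially. x n < e"
proof -
  have "\<forall>\<^sub>F n in sequentially. ereal (x n) < ereal e"
    by (rule Limsup_lessD) (use assms in simp)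
  then show ?thesis by simp
qed

lemma recur_conv:
  fixes a d c q :: "nat \<Rightarrow> real"
  assumes a_nn: "\<And>t. 0 \<le> a t" and d_nn: "\<And>t. 0 \<le> d t" and c_nn: "\<And>t. 0 \<le> c t"
    and q: "\<And>t. t > N \<Longrightarrow> 0 \<le> q t \<and> q t \<le> 1"
    and rec: "\<And>t. t \<ge> N \<Longrightarrow> (a (Suc t))\<^sup>2 \<le> (q (Suc t))\<^sup>2 * (a t + d (Suc t))\<^sup>2 + c (Suc t)"
    and P0: "(\<lambda>n. \<Prod>i=N+1..n. q i) \<longlonglongrightarrow> 0"
    and Bc: "(\<lambda>n. \<Sum>k=N+1..n. c k * (\<Prod>i=k+1..n. (q i)\<^sup>2)) \<longlonglongrightarrow> 0"
    and Cc: "(\<lambda>n. \<Sum>k=N+1..n. d k * (\<Prod>i=k+1..n. q i)) \<longlonglongrightarrow> 0"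
  shows "a \<longlonglongrightarrow> 0"
proof (rule tendsto_sandwich[of "\<lambda>_. 0" _ _ "\<lambda>t. sqrt ((\<Prod>i=N+1..t. (q i)\<^sup>2) * (a N)\<^sup>2 + (\<Sum>k=N+1..t. c k * (\<Prod>i=k+1..t. (q i)\<^sup>2)))
                + (\<Sum>k=N+1..t. d k * (\<Prod>i=k+1..t. q i))"])
  show "\<forall>\<^sub>F n in sequentially. 0 \<le> a n" using a_nn by simp
  show "\<forall>\<^sub>F t in sequentially. a t \<le> sqrt ((\<Prod>i=N+1..t. (q i)\<^sup>2) * (a N)\<^sup>2 + (\<Sum>k=N+1..t. c k * (\<Prod>i=k+1..t. (q i)\<^sup>2)))
                + (\<Sum>k=N+1..t. d k * (\<Prod>i=k+1..t. q i))"
    unfolding eventually_sequentially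
    by (rule exI[of _ N], intro allI impI recur_bound[where a=a and d=d and c=c and q=q and N=N]) (use a_nn d_nn c_nn q rec in auto)
  have "(\<lambda>t. (\<Prod>i=N+1..t. (q i)\<^sup>2)) = (\<lambda>t. (\<Prod>i=N+1..t. q i)\<^sup>2)"
    by (simp add: prod_power_distrib)
  then have "(\<lambda>t. (\<Prod>i=N+1..t. (q i)\<^sup>2)) \<longlonglongrightarrow> 0\<^sup>2" using tendsto_power[OF P0, of 2] by simp
  then have "(\<lambda>t. sqrt ((\<Prod>i=N+1..t. (q i)\<^sup>2) * (a N)\<^sup>2 + (\<Sum>k=N+1..t. c k * (\<Prod>i=k+1..t. (q i)\<^sup>2)))
                + (\<Sum>k=N+1..t. d k * (\<Prod>i=k+1..t. q i))) \<longlonglongrightarrow> sqrt (0\<^sup>2 * (a N)\<^sup>2 + 0) + 0"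
    by (intro tendsto_intros Bc Cc)
  then show "(\<lambda>t. sqrt ((\<Prod>i=N+1..t. (q i)\<^sup>2) * (a N)\<^sup>2 + (\<Sum>k=N+1..t. c k * (\<Prod>i=k+1..t. (q i)\<^sup>2)))
                + (\<Sum>k=N+1..t. d k * (\<Prod>i=k+1..t. q i))) \<longlonglongrightarrow> 0" by simp
qed simp

lemma prod_to_zero:
  fixes x :: "nat \<Rightarrow> real"
  assumes A: "filterlim (\<lambda>n. \<Sum>t=1..n. x t) at_top sequentially"
    and x: "\<And>t. t > N \<Longrightarrow> 0 \<le> 1 - x t"
  shows "(\<lambda>n. \<Prod>i=N+1..n. (1 - x i)) \<longlonglongrightarrow> 0"
proof (rule tendsto_sandwich[of "\<lambda>_. 0" _ _ "\<lambda>n. exp (- ((\<Sum>t=1..n. x t) - (\<Sum>t=1..N. x t)))"])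
  show "\<forall>\<^sub>F n in sequentially. 0 \<le> (\<Prod>i=N+1..n. (1 - x i))"
    using x by (intro always_eventually allI prod_nonneg) auto
  show "\<forall>\<^sub>F n in sequentially. (\<Prod>i=N+1..n. (1 - x i)) \<le> exp (- ((\<Sum>t=1..n. x t) - (\<Sum>t=1..N. x t)))"
    unfolding eventually_sequentially
  proof (intro exI[of _ N] allI impI)
    fix n assume n: "N \<le> n"
    have "(\<Sum>t=1..n. x t) - (\<Sum>t=1..N. x t) = (\<Sum>t=N+1..n. x t)"
      using sum_split_mid[of 0 N n x] n by simp
    then have "exp (- ((\<Sum>t=1..n. x t) - (\<Sum>t=1..N. x t))) = (\<Prod>i=N+1..n. exp (- x i))"
      by (simp add: exp_sum[symmetric] sum_negf)
    moreover have "(\<Prod>i=N+1..n. (1 - x i)) \<le> (\<Prod>i=N+1..n. exp (- x i))"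
      using x by (intro prod_mono) (auto simp: exp_minus_ge)
    ultimately show "(\<Prod>i=N+1..n. (1 - x i)) \<le> exp (- ((\<Sum>t=1..n. x t) - (\<Sum>t=1..N. x t)))" by simp
  qed
  have "filterlim (\<lambda>n. (- (\<Sum>t=1..N. x t)) + (\<Sum>t=1..n. x t)) at_top sequentially"
    by (rule filterlim_tendsto_add_at_top[OF tendsto_const A])
  then have "filterlim (\<lambda>n. - ((\<Sum>t=1..n. x t) - (\<Sum>t=1..N. x t))) at_bot sequentially"
    by (simp add: filterlim_uminus_at_bot)
  then show "(\<lambda>n. exp (- ((\<Sum>t=1..n. x t) - (\<Sum>t=1..N. x t)))) \<longlonglongrightarrow> 0"
    by (rule filterlim_compose[OF exp_at_bot])
qed simp

lemma Bc_lemma: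
  fixes g q :: "nat \<Rightarrow> real"
  assumes B: "limsup (\<lambda>n. ereal (\<Sum>k=1..n. (g k)\<^sup>2 * (\<Prod>i=k+1..n. (q i)\<^sup>2))) = 0" and C: "C \<ge> 0"
  shows "(\<lambda>n. \<Sum>k=N+1..n. (C * (g k)\<^sup>2) * (\<Prod>i=k+1..n. (q i)\<^sup>2)) \<longlonglongrightarrow> 0"
proof -
  define Bs where "Bs n = (\<Sum>k=1..n. (g k)\<^sup>2 * (\<Prod>i=k+1..n. (q i)\<^sup>2))" for n
  have Bs0: "Bs \<longlonglongrightarrow> 0"
  proof (rule order_tendstoI)
    fix y :: real assume "y < 0"
    then show "\<forall>\<^sub>F n in sequentially. y < Bs n"
      unfolding Bs_def by (intro always_eventually allI, rule less_le_trans[of _ 0]) (auto intro!: sum_nonneg mult_nonneg_nonneg prod_nonneg)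
  next
    fix y :: real assume "y > 0"
    then show "\<forall>\<^sub>F n in sequentially. Bs n < y" unfolding Bs_def by (rule limsup_ev_less[OF B])
  qed
  show ?thesis
  proof (rule tendsto_sandwich[of "\<lambda>_. 0" _ _ "\<lambda>n. C * Bs n"])
    show "\<forall>\<^sub>F n in sequentially. 0 \<le> (\<Sum>k=N+1..n. (C * (g k)\<^sup>2) * (\<Prod>i=k+1..n. (q i)\<^sup>2))"
      using C by (intro always_eventually allI sum_nonneg mult_nonneg_nonneg prod_nonneg) auto
    show "\<forall>\<^sub>F n in sequentially. (\<Sum>k=N+1..n. (C * (g k)\<^sup>2) * (\<Prod>i=k+1..n. (q i)\<^sup>2)) \<le> C * Bs n"
      unfolding eventually_sequentially
    proof (intro exI[of _ N] allI impI)
      fix n assume n: "N \<le> n"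
      have "Bs n = (\<Sum>k=1..N. (g k)\<^sup>2 * (\<Prod>i=k+1..n. (q i)\<^sup>2)) + (\<Sum>k=N+1..n. (g k)\<^sup>2 * (\<Prod>i=k+1..n. (q i)\<^sup>2))"
        unfolding Bs_def using sum_split_mid[of 0 N n] n by simp
      moreover have "0 \<le> (\<Sum>k=1..N. (g k)\<^sup>2 * (\<Prod>i=k+1..n. (q i)\<^sup>2))"
        by (intro sum_nonneg mult_nonneg_nonneg prod_nonneg) auto
      ultimately have "(\<Sum>k=N+1..n. (g k)\<^sup>2 * (\<Prod>i=k+1..n. (q i)\<^sup>2)) \<le> Bs n" by linarith
      then have "C * (\<Sum>k=N+1..n. (g k)\<^sup>2 * (\<Prod>i=k+1..n. (q i)\<^sup>2)) \<le> C * Bs n"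
        using C by (rule mult_left_mono)
      then show "(\<Sum>k=N+1..n. (C * (g k)\<^sup>2) * (\<Prod>i=k+1..n. (q i)\<^sup>2)) \<le> C * Bs n"
        by (simp add: sum_distrib_left mult.assoc)
    qed
    show "(\<lambda>n. C * Bs n) \<longlonglongrightarrow> 0" using tendsto_mult[OF tendsto_const Bs0, of C] by simp
  qed simp
qed

lemma Cc_lemma:
  fixes d q :: "nat \<Rightarrow> real"
  assumes C: "limsup (\<lambda>n. ereal (\<Sum>k=1..n. d k * (\<Prod>i=k+1..n. q i))) = 0"
    and P0: "(\<lambda>n. \<Prod>i=N+1..n. q i) \<longlonglongrightarrow> 0"
    and d: "\<And>k. 0 \<le> d k" and q: "\<And>i. i > N \<Longrightarrow> 0 \<le> q i"
  shows "(\<lambda>n. \<Sum>k=N+1..n. d k * (\<Prod>i=k+1..n. q i)) \<longlonglongrightarrow> 0"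
proof -
  define Cs where "Cs n = (\<Sum>k=1..n. d k * (\<Prod>i=k+1..n. q i))" for n
  define Kc where "Kc = (\<Sum>k=1..N. d k * (\<Prod>i=k+1..N. q i))"
  define V where "V n = (\<Sum>k=N+1..n. d k * (\<Prod>i=k+1..n. q i))" for n
  have split: "Cs n = Kc * (\<Prod>i=N+1..n. q i) + V n" if n: "N \<le> n" for n
  proof -
    have "Cs n = (\<Sum>k=1..N. d k * (\<Prod>i=k+1..n. q i)) + V n"
      unfolding Cs_def V_def using sum_split_mid[of 0 N n] n by simp
    also have "(\<Sum>k=1..N. d k * (\<Prod>i=k+1..n. q i)) = (\<Sum>k=1..N. d k * ((\<Prod>i=k+1..N. q i) * (\<Prod>i=N+1..n. q i)))"
    proof (intro sum.cong refl)
      fix k assume "k \<in> {1..N}"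
      then show "d k * (\<Prod>i=k+1..n. q i) = d k * ((\<Prod>i=k+1..N. q i) * (\<Prod>i=N+1..n. q i))"
        using prod_split_mid[of k N n q] n by simp
    qed
    also have "\<dots> = Kc * (\<Prod>i=N+1..n. q i)" unfolding Kc_def by (simp add: sum_distrib_right mult.assoc)
    finally show ?thesis .
  qed
  have V0: "0 \<le> V n" for n unfolding V_def using d q by (intro sum_nonneg mult_nonneg_nonneg prod_nonneg) auto
  have KP: "(\<lambda>n. Kc * (\<Prod>i=N+1..n. q i)) \<longlonglongrightarrow> 0" using tendsto_mult[OF tendsto_const P0, of Kc] by simp
  show ?thesis unfolding V_def[symmetric]
  proof (rule order_tendstoI)
    fix y :: real assume y: "y < 0"
    show "\<forall>\<^sub>F n in sequentially. y < V n" by (intro always_eventually allI less_le_trans[OF y V0])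
  next
    fix y :: real assume y: "y > 0"
    have e1: "\<forall>\<^sub>F n in sequentially. Cs n < y / 2" unfolding Cs_def by (rule limsup_ev_less[OF C]) (use y in simp)
    have e2: "\<forall>\<^sub>F n in sequentially. - (y / 2) < Kc * (\<Prod>i=N+1..n. q i)"
      using order_tendstoD(1)[OF KP, of "- (y/2)"] y by simp
    have e3: "\<forall>\<^sub>F n in sequentially. N \<le> n" by (rule eventually_ge_at_top)
    show "\<forall>\<^sub>F n in sequentially. V n < y"
      using e1 e2 e3 by eventually_elim (use split in fastforce)
  qed
qed



theorem theoremA:
  fixes X :: "'a::euclidean_space set"
    and K :: "'a \<Rightarrow> 'a \<Rightarrow> real"
    and evl :: "'h::{real_inner,complete_space} \<Rightarrow> 'a \<Rightarrow> real"
    and kx :: "'a \<Rightarrow> 'h"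
    and \<rho> :: "('a \<times> real) measure"
    and M\<rho> :: real
    and fr :: 'h
    and flam :: "real \<Rightarrow> 'h"
    and \<gamma> lam :: "nat \<Rightarrow> real"
    and f0 :: 'h
    and P :: "'w measure"
    and zs :: "nat \<Rightarrow> 'w \<Rightarrow> 'a \<times> real"
  assumes X_closed: "closed X"
    and mercer: "mercer_bounded X K"
    and rkhs: "rkhs_of X K evl kx"
    and rho_prob: "prob_space \<rho>" and rho_sets: "sets \<rho> = sets borel"
    and M_nonneg: "0 \<le> M\<rho>"
    and supp: "AE z in \<rho>. fst z \<in> X \<and> \<bar>snd z\<bar> \<le> M\<rho>"
    and LK_pos: "LK_strictly_positive \<rho> K"
    and embed: "\<And>h. (AE x in marginal \<rho>. evl h x = 0) \<Longrightarrow> h = 0"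
    and f_rho_in_HK: "is_regression_fn \<rho> (evl fr)"
    and flam_def: "\<And>l f. l > 0 \<Longrightarrow> reg_risk \<rho> evl l (flam l) \<le> reg_risk \<rho> evl l f"
    and gamma_pos: "\<And>t. t \<ge> 1 \<Longrightarrow> \<gamma> t > 0"
    and lam_pos: "\<And>t. lam t > 0"
    and gamma_lim: "\<gamma> \<longlonglongrightarrow> 0"
    and lam_lim: "lam \<longlonglongrightarrow> 0"
    and P_prob: "prob_space P"
    and iid: "prob_space.indep_vars P (\<lambda>_. borel) zs {1..}"
    and law: "\<And>t. t \<ge> 1 \<Longrightarrow> distr P borel (zs t) = \<rho>"
    and A: "filterlim (\<lambda>n. \<Sum>t=1..n. \<gamma> t * lam t) at_top sequentially"
    and B: "limsup (\<lambda>n. ereal (\<Sum>k=1..n. (\<gamma> k)\<^sup>2 * (\<Prod>i=k+1..n. (1 - \<gamma> i * lam i)\<^sup>2))) = 0"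
    and C: "limsup (\<lambda>n. ereal (\<Sum>k=1..n. norm (flam (lam k) - flam (lam (k - 1)))
                                   * (\<Prod>i=k+1..n. (1 - \<gamma> i * lam i)))) = 0"
  shows "(\<lambda>t. \<integral>\<omega>. (norm (online f0 \<gamma> lam kx evl (\<lambda>s. zs s \<omega>) t - fr))\<^sup>2 \<partial>P) \<longlonglongrightarrow> 0"
proof -
  interpret R: rk3 X K evl kx \<rho> M\<rho> fr flam P zs \<gamma> lam f0
    by (rule rk3.intro[OF rk2.intro[OF rk.intro[OF X_closed mercer rkhs]
          rk2_axioms.intro[OF rho_prob rho_sets M_nonneg supp embed f_rho_in_HK flam_def]]
          rk3_axioms.intro[OF P_prob iid law]])
  interpret P: prob_space P by (rule P_prob)
  define e where "e t c = (\<integral>\<omega>. (norm (R.Fp t \<omega> - c))\<^sup>2 \<partial>P)" for t c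
  have e_nn: "e t c \<ge> 0" for t c unfolding e_def by (rule integral_nonneg_AE) auto
  define a where "a t = sqrt (e t (flam (lam t)))" for t
  define d where "d k = norm (flam (lam k) - flam (lam (k - 1)))" for k
  define c where "c k = 2 * R.C0 * (\<gamma> k)\<^sup>2" for k
  define q where "q i = 1 - \<gamma> i * lam i" for i
  have C0_nn: "R.C0 \<ge> 0" unfolding R.C0_def by simp
  have "(\<lambda>t. \<gamma> t * (R.kap\<^sup>2 + lam t)) \<longlonglongrightarrow> 0 * (R.kap\<^sup>2 + 0)"
    by (intro tendsto_intros gamma_lim lam_lim)
  then have ev1: "\<forall>\<^sub>F t in sequentially. \<gamma> t * (R.kap\<^sup>2 + lam t) < 1"
    by (intro order_tendstoD(2)) auto
  have ev2: "\<forall>\<^sub>F t in sequentially. lam t < 1" using order_tendstoD(2)[OF lam_lim, of 1] by simp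
  obtain N where N: "\<And>t. t \<ge> N \<Longrightarrow> \<gamma> t * (R.kap\<^sup>2 + lam t) < 1 \<and> lam t < 1"
    using eventually_conj[OF ev1 ev2] unfolding eventually_sequentially by blast
  have condS: "lam (Suc t) \<le> 1 \<and> \<gamma> (Suc t) * R.kap\<^sup>2 \<le> 1 - \<gamma> (Suc t) * lam (Suc t)" if "t \<ge> N" for t
    using N[of "Suc t"] that by (simp add: algebra_simps)
  have qb: "0 \<le> q t \<and> q t \<le> 1" if "t > N" for t
  proof -
    define t' where "t' = t - 1"
    have t': "t = Suc t'" "t' \<ge> N" using that unfolding t'_def by auto
    have g: "\<gamma> t > 0" using gamma_pos[of t] t' by simp
    have "0 \<le> \<gamma> t * R.kap\<^sup>2" using g by simp
    also have "\<dots> \<le> q t" using condS[OF t'(2)] unfolding q_def t'(1) by simp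
    finally show ?thesis using g lam_pos[of t] unfolding q_def by simp
  qed
  have rec: "(a (Suc t))\<^sup>2 \<le> (q (Suc t))\<^sup>2 * (a t + d (Suc t))\<^sup>2 + c (Suc t)" if t: "t \<ge> N" for t
  proof -
    have cs: "0 < lam (Suc t)" "lam (Suc t) \<le> 1" "\<gamma> (Suc t) > 0"
        "\<gamma> (Suc t) * R.kap\<^sup>2 \<le> 1 - \<gamma> (Suc t) * lam (Suc t)"
      using condS[OF t] lam_pos gamma_pos[of "Suc t"] by auto
    have "(a (Suc t))\<^sup>2 = e (Suc t) (flam (lam (Suc t)))" unfolding a_def using e_nn by simp
    also have "\<dots> \<le> (q (Suc t))\<^sup>2 * e t (flam (lam (Suc t))) + c (Suc t)"
      unfolding e_def q_def c_def using R.step_E[OF cs] by (simp add: mult_ac)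
    also have "\<dots> \<le> (q (Suc t))\<^sup>2 * (a t + d (Suc t))\<^sup>2 + c (Suc t)"
    proof -
      have "e t (flam (lam (Suc t))) \<le> (a t + d (Suc t))\<^sup>2"
        unfolding e_def a_def d_def using R.E_shift[of t "flam (lam (Suc t))" "flam (lam t)"]
        by (simp add: norm_minus_commute)
      then show ?thesis by (intro add_mono mult_left_mono) auto
    qed
    finally show ?thesis .
  qed
  have P0: "(\<lambda>n. \<Prod>i=N+1..n. q i) \<longlonglongrightarrow> 0"
    unfolding q_def by (rule prod_to_zero[OF A]) (use qb in \<open>auto simp: q_def\<close>)
  have Bc: "(\<lambda>n. \<Sum>k=N+1..n. c k * (\<Prod>i=k+1..n. (q i)\<^sup>2)) \<longlonglongrightarrow> 0"
    unfolding c_def q_def by (rule Bc_lemma[OF B]) (use C0_nn in simp)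
  have Cc: "(\<lambda>n. \<Sum>k=N+1..n. d k * (\<Prod>i=k+1..n. q i)) \<longlonglongrightarrow> 0"
    by (rule Cc_lemma[OF _ P0]) (use C qb in \<open>auto simp: d_def q_def\<close>)
  have a0: "a \<longlonglongrightarrow> 0"
    by (rule recur_conv[OF _ _ _ qb rec P0 Bc Cc]) (use e_nn C0_nn in \<open>auto simp: a_def d_def c_def\<close>)
  have fl: "(\<lambda>t. flam (lam t)) \<longlonglongrightarrow> fr" by (rule R.flam_conv[OF lam_pos lam_lim])
  have bnd: "e t fr \<le> (a t + norm (flam (lam t) - fr))\<^sup>2" for t
    unfolding e_def a_def by (rule R.E_shift)
  have "(\<lambda>t. (a t + norm (flam (lam t) - fr))\<^sup>2) \<longlonglongrightarrow> (0 + norm (fr - fr))\<^sup>2"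
    by (intro tendsto_intros a0 fl)
  then have bnd0: "(\<lambda>t. (a t + norm (flam (lam t) - fr))\<^sup>2) \<longlonglongrightarrow> 0" by simp
  let ?T = "\<lambda>t. \<integral>\<omega>. (norm (online f0 \<gamma> lam kx evl (\<lambda>s. zs s \<omega>) t - fr))\<^sup>2 \<partial>P"
  have T_le: "?T t \<le> e t fr" for t
  proof (cases "integrable P (\<lambda>\<omega>. (norm (online f0 \<gamma> lam kx evl (\<lambda>s. zs s \<omega>) t - fr))\<^sup>2)")
    case True
    have "?T t = e t fr" unfolding e_def
    proof (rule integral_cong_AE)
      show "(\<lambda>\<omega>. (norm (online f0 \<gamma> lam kx evl (\<lambda>s. zs s \<omega>) t - fr))\<^sup>2) \<in> borel_measurable P"
        using True by auto
      show "(\<lambda>\<omega>. (norm (R.Fp t \<omega> - fr))\<^sup>2) \<in> borel_measurable P" by (rule R.Fp_norm2_meas)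
      show "AE \<omega> in P. (norm (online f0 \<gamma> lam kx evl (\<lambda>s. zs s \<omega>) t - fr))\<^sup>2 = (norm (R.Fp t \<omega> - fr))\<^sup>2"
        using R.AE_good
      proof eventually_elim
        case (elim \<omega>)
        have "online f0 \<gamma> lam kx evl (\<lambda>s. zs s \<omega>) t = online f0 \<gamma> lam R.kxc evl (\<lambda>s. zs s \<omega>) t"
          by (rule R.online_kx) (use elim in \<open>auto simp: R.good_def\<close>)
        then show ?case by (simp add: R.Fp_def)
      qed
    qed
    then show ?thesis by simp
  next
    case False
    then show ?thesis using e_nn by (simp add: not_integrable_integral_eq)
  qed
  have T_nn: "0 \<le> ?T t" for t by (rule integral_nonneg_AE) auto
  show ?thesis
  proof (rule tendsto_sandwich[of "\<lambda>_. 0" _ _ "\<lambda>t. (a t + norm (flam (lam t) - fr))\<^sup>2"])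
    show "\<forall>\<^sub>F n in sequentially. 0 \<le> ?T n" using T_nn by simp
    show "\<forall>\<^sub>F n in sequentially. ?T n \<le> (a n + norm (flam (lam n) - fr))\<^sup>2"
      by (intro always_eventually allI order_trans[OF T_le bnd])
  qed (simp, rule bnd0)
qed

end
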